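(* Let $S_\lambda\in\mathcal B(\ell^2(V))$ be a $2$-isometric weighted shift on a rooted directed tree $\mathcal T=(V,E)$ with root $\omega$ and weights $\{\lambda_v\}_{v\in V^\circ}$, and suppose there is $\{\alpha_v\}_{v\in V}\subseteq\mathbb R_+$ with $\|S_\lambda e_u\|=\alpha_{\mathrm{par}(u)}$ for all $u\in V^\circ$. Then $\mathcal T$ is leafless and $$S_\lambda\cong S_{[x]}\oplus\bigoplus_{k=1}^\infty\big(S_{[\xi_k(x)]}\big)^{\oplus j_k},$$ where $x=\|S_\lambda e_\omega\|$ and $j_k=\mathfrak j^{\mathcal T}_k$ for $k\in\mathbb N$. Moreover, if all weights are nonzero, then $j_k\le\aleph_0$ for all $k$.
   Context: A directed tree $\mathcal T=(V,E)$ is a connected directed graph without circuits with each vertex having at most one parent; $\omega$ denotes the root, $V^\circ=V\setminus\{\omega\}$, $\mathrm{par}(v)$ is the parent, $\mathrm{Chi}(u)$ the set of children, $\deg u=\#\mathrm{Chi}(u)$, $\mathrm{Chi}^0(\omega)=\{\omega\}$, $\mathrm{Chi}^{n}(\omega)=\bigcup_{u\in\mathrm{Chi}^{n-1}(\omega)}\mathrm{Chi}(u)$. The weighted shift is $(S_\lambda f)(v)=\lambda_vf(\mathrm{par}(v))$, $(S_\lambda f)(\omega)=0$; $e_u$ is the indicator of $\{u\}$. $2$-isometry: $I-2T^*T+T^{*2}T^2=0$. $\xi_n(x)=\sqrt{\frac{1+(n+1)(x^2-1)}{1+n(x^2-1)}}$. For $x\ge1$, $S_{[x]}$ is the unilateral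 weighted shift in $\ell^2(\mathbb Z_+)$ with weights $\{\xi_n(x)\}_{n\ge0}$. For a leafless tree, the $k$th generation branching degree is $\mathfrak j^{\mathcal T}_k=\sum_{u\in\mathrm{Chi}^{k-1}(\omega)}(\deg u-1)$. $A^{\oplus\mathfrak n}$ is the $\mathfrak n$-fold orthogonal sum of copies of $A$ ($A^{\oplus0}=0$ on the zero space). *)

theory Defs
  imports "HOL-Analysis.Analysis"
begin

section \<open>Rooted directed trees (vertex set = the whole type 'v)\<close>

text \<open>A rooted directed tree on the vertex type 'v is given by its rt and its
parent map par; by convention par rt = rt (the rt has no parent).
Every vertex reaches the rt by iterating par, which gives connectedness and
absence of circuits.\<close>

definition rooted_tree :: "('v \<Rightarrow> 'v) \<Rightarrow> 'v \<Rightarrow> bool" where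
  "rooted_tree par rt \<longleftrightarrow> par rt = rt \<and> (\<forall>v. \<exists>n. (par ^^ n) v = rt)"

definition children :: "('v \<Rightarrow> 'v) \<Rightarrow> 'v \<Rightarrow> 'v \<Rightarrow> 'v set" where
  "children par rt u = {v. v \<noteq> rt \<and> par v = u}"

definition leafless :: "('v \<Rightarrow> 'v) \<Rightarrow> 'v \<Rightarrow> bool" where
  "leafless par rt \<longleftrightarrow> (\<forall>u. children par rt u \<noteq> {})"

primrec generation :: "('v \<Rightarrow> 'v) \<Rightarrow> 'v \<Rightarrow> nat \<Rightarrow> 'v set" where
  "generation par rt 0 = {rt}"
| "generation par rt (Suc n) = (\<Union>u\<in>generation par rt n. children par rt u)"

text \<open>A set whose cardinality is the k-th generation branching degree
  j_k = sum over u in Chi^(k-1)(rt) of (deg u - 1) (cardinal arithmetic; for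
  leafless trees): the disjoint union over u of Chi(u) with one child removed.\<close>
definition branching_set :: "('v \<Rightarrow> 'v) \<Rightarrow> 'v \<Rightarrow> nat \<Rightarrow> ('v \<times> 'v) set" where
  "branching_set par rt k =
     (SIGMA u:generation par rt (k - 1).
        children par rt u - {SOME w. w \<in> children par rt u})"

definition l2 :: "'a set \<Rightarrow> ('a \<Rightarrow> complex) set" where
  "l2 A = {f. (\<forall>a. a \<notin> A \<longrightarrow> f a = 0) \<and> (\<lambda>a. (cmod (f a))\<^sup>2) summable_on A}"

definition l2_inner :: "('a \<Rightarrow> complex) \<Rightarrow> ('a \<Rightarrow> complex) \<Rightarrow> complex" where
  "l2_inner f g = (\<Sum>\<^sub>\<infinity>a. f a * cnj (g a))"

definition l2_norm :: "('a \<Rightarrow> complex) \<Rightarrow> real" where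
  "l2_norm f = sqrt (\<Sum>\<^sub>\<infinity>a. (cmod (f a))\<^sup>2)"

definition unit_vec :: "'a \<Rightarrow> 'a \<Rightarrow> complex" where
  "unit_vec u = (\<lambda>v. if v = u then 1 else 0)"

definition bounded_on_l2 :: "'a set \<Rightarrow> (('a \<Rightarrow> complex) \<Rightarrow> ('a \<Rightarrow> complex)) \<Rightarrow> bool" where
  "bounded_on_l2 A T \<longleftrightarrow>
     (\<forall>f\<in>l2 A. T f \<in> l2 A) \<and>
     (\<forall>f\<in>l2 A. \<forall>g\<in>l2 A. \<forall>c. T (\<lambda>a. c * f a + g a) = (\<lambda>a. c * T f a + T g a)) \<and>
     (\<exists>C. \<forall>f\<in>l2 A. l2_norm (T f) \<le> C * l2_norm f)"

text \<open>2-isometry: I - 2 T*T + T*^2 T^2 = 0, i.e. the sesquilinear form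
  <(I - 2T*T + T*^2T^2) f, g> = <f,g> - 2<Tf,Tg> + <T^2 f, T^2 g> vanishes.\<close>
definition two_isometry :: "'a set \<Rightarrow> (('a \<Rightarrow> complex) \<Rightarrow> ('a \<Rightarrow> complex)) \<Rightarrow> bool" where
  "two_isometry A T \<longleftrightarrow>
     (\<forall>f\<in>l2 A. \<forall>g\<in>l2 A.
        l2_inner f g - 2 * l2_inner (T f) (T g) + l2_inner (T (T f)) (T (T g)) = 0)"

definition unitarily_equivalent ::
  "'a set \<Rightarrow> (('a \<Rightarrow> complex) \<Rightarrow> ('a \<Rightarrow> complex)) \<Rightarrow>
   'b set \<Rightarrow> (('b \<Rightarrow> complex) \<Rightarrow> ('b \<Rightarrow> complex)) \<Rightarrow> bool" where
  "unitarily_equivalent A T B R \<longleftrightarrow>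
     (\<exists>U. bij_betw U (l2 A) (l2 B) \<and>
          (\<forall>f\<in>l2 A. \<forall>g\<in>l2 A. \<forall>c. U (\<lambda>a. c * f a + g a) = (\<lambda>b. c * U f b + U g b)) \<and>
          (\<forall>f\<in>l2 A. \<forall>g\<in>l2 A. l2_inner (U f) (U g) = l2_inner f g) \<and>
          (\<forall>f\<in>l2 A. U (T f) = R (U f)))"

definition tree_shift ::
  "('v \<Rightarrow> 'v) \<Rightarrow> 'v \<Rightarrow> ('v \<Rightarrow> complex) \<Rightarrow> ('v \<Rightarrow> complex) \<Rightarrow> ('v \<Rightarrow> complex)" where
  "tree_shift par rt lam f = (\<lambda>v. if v = rt then 0 else lam v * f (par v))"

definition xi :: "nat \<Rightarrow> real \<Rightarrow> real" where
  "xi n x = sqrt ((1 + real (n + 1) * (x\<^sup>2 - 1)) / (1 + real n * (x\<^sup>2 - 1)))"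

text \<open>Orthogonal sum over j of the unilateral weighted shifts S_[y j], realised on
  l^2(J x N): the j-th copy of l^2(N) is the slice {j} x N, and
  S_[y] e_n = xi n y e_(n+1).\<close>
definition shift_sum :: "('j \<Rightarrow> real) \<Rightarrow> ('j \<times> nat \<Rightarrow> complex) \<Rightarrow> ('j \<times> nat \<Rightarrow> complex)" where
  "shift_sum y f = (\<lambda>(j, n). if n = 0 then 0 else complex_of_real (xi (n - 1) (y j)) * f (j, n - 1))"

text \<open>Index set of S_[x] (+) (+)_{k>=1} (S_[xi_k x])^(+ j_k): the index (0,rt,rt)
  carries S_[x]; the indices (k,u,v) with (u,v) in branching_set k (a set of
  cardinality j_k) carry copies of S_[xi_k(x)].\<close>
definition sum_index :: "('v \<Rightarrow> 'v) \<Rightarrow> 'v \<Rightarrow> (nat \<times> 'v \<times> 'v) set" where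
  "sum_index par rt =
     insert (0, rt, rt) {(k, u, v). k \<ge> 1 \<and> (u, v) \<in> branching_set par rt k}"

definition sum_param :: "real \<Rightarrow> nat \<times> 'v \<times> 'v \<Rightarrow> real" where
  "sum_param x = (\<lambda>(k, u, v). if k = 0 then x else xi k x)"

end

theory Submission
  imports Defs
begin


section \<open>Generic l2 toolkit\<close>

definition nn :: "'a set \<Rightarrow> ('a \<Rightarrow> complex) \<Rightarrow> ennreal" where
  "nn C f = (\<Sum>\<^sub>\<infinity>a\<in>C. ennreal ((cmod (f a))\<^sup>2))"
definition sq :: "'a set \<Rightarrow> ('a \<Rightarrow> complex) \<Rightarrow> bool" where
  "sq C f \<longleftrightarrow> (\<lambda>a. (cmod (f a))\<^sup>2) summable_on C"
definition n2 :: "'a set \<Rightarrow> ('a \<Rightarrow> complex) \<Rightarrow> real" where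
  "n2 C f = (\<Sum>\<^sub>\<infinity>a\<in>C. (cmod (f a))\<^sup>2)"
definition ip :: "'a set \<Rightarrow> ('a \<Rightarrow> complex) \<Rightarrow> ('a \<Rightarrow> complex) \<Rightarrow> complex" where
  "ip C f g = (\<Sum>\<^sub>\<infinity>a\<in>C. f a * cnj (g a))"

lemma enn_infsum_real:
  fixes g :: "'a \<Rightarrow> real"
  assumes "g summable_on C" "\<And>a. a\<in>C \<Longrightarrow> g a \<ge> 0"
  shows "(\<Sum>\<^sub>\<infinity>a\<in>C. ennreal (g a)) = ennreal (\<Sum>\<^sub>\<infinity>a\<in>C. g a)"
proof -
  have "(\<Sum>\<^sub>\<infinity>a\<in>C. ennreal (g a)) = (SUP F\<in>{F. finite F \<and> F \<subseteq> C}. sum (\<lambda>a. ennreal (g a)) F)"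
    by (rule nonneg_infsum_complete) simp
  also have "\<dots> = (SUP F\<in>{F. finite F \<and> F \<subseteq> C}. ennreal (sum g F))"
    using assms(2) by (intro SUP_cong refl) (auto intro!: sum_ennreal)
  also have "\<dots> = ennreal (\<Sum>\<^sub>\<infinity>a\<in>C. g a)"
    using infsum_nonneg_is_SUPREMUM_ennreal[OF assms] by simp
  finally show ?thesis .
qed

lemma enn_sum_le_infsum:
  fixes g :: "'a \<Rightarrow> ennreal"
  assumes "finite F" "F \<subseteq> C"
  shows "sum g F \<le> infsum g C"
proof -
  have "sum g F \<le> (SUP F\<in>{F. finite F \<and> F \<subseteq> C}. sum g F)"
    using assms by (intro SUP_upper) auto
  also have "\<dots> = infsum g C"
    by (rule nonneg_infsum_complete[symmetric]) simp
  finally show ?thesis .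
qed

lemma enn_infsum_le:
  fixes g :: "'a \<Rightarrow> ennreal"
  assumes "\<And>F. finite F \<Longrightarrow> F \<subseteq> C \<Longrightarrow> sum g F \<le> M"
  shows "infsum g C \<le> M"
proof -
  have "infsum g C = (SUP F\<in>{F. finite F \<and> F \<subseteq> C}. sum g F)"
    by (rule nonneg_infsum_complete) simp
  also have "\<dots> \<le> M" using assms by (intro SUP_least) auto
  finally show ?thesis .
qed

lemma enn_finite_summable:
  fixes g :: "'a \<Rightarrow> real"
  assumes "\<And>a. a\<in>C \<Longrightarrow> g a \<ge> 0" "(\<Sum>\<^sub>\<infinity>a\<in>C. ennreal (g a)) < \<infinity>"
  shows "g summable_on C"
proof (rule nonneg_bdd_above_summable_on)
  show "\<And>x. x \<in> C \<Longrightarrow> 0 \<le> g x" using assms(1) .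
  show "bdd_above (sum g ` {F. F \<subseteq> C \<and> finite F})"
  proof (rule bdd_aboveI2)
    fix F assume F: "F \<in> {F. F \<subseteq> C \<and> finite F}"
    have "ennreal (sum g F) = (\<Sum>a\<in>F. ennreal (g a))"
      using F assms(1) by (subst sum_ennreal) auto
    also have "\<dots> \<le> (\<Sum>\<^sub>\<infinity>a\<in>C. ennreal (g a))"
      using F by (intro enn_sum_le_infsum) auto
    finally have *: "ennreal (sum g F) \<le> (\<Sum>\<^sub>\<infinity>a\<in>C. ennreal (g a))" .
    have "(\<Sum>\<^sub>\<infinity>a\<in>C. ennreal (g a)) = ennreal (enn2real (\<Sum>\<^sub>\<infinity>a\<in>C. ennreal (g a)))"
      using assms(2) by (simp add: ennreal_enn2real_if)
    with * show "sum g F \<le> enn2real (\<Sum>\<^sub>\<infinity>a\<in>C. ennreal (g a))"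
      by (metis ennreal_le_iff enn2real_nonneg)
  qed
qed

lemma nn_sq: "sq C f \<Longrightarrow> nn C f = ennreal (n2 C f)"
  unfolding nn_def sq_def n2_def by (rule enn_infsum_real) auto

lemma sq_iff_nn: "sq C f \<longleftrightarrow> nn C f < \<infinity>"
proof
  assume "sq C f" then show "nn C f < \<infinity>" by (simp add: nn_sq)
next
  assume "nn C f < \<infinity>" then show "sq C f"
    unfolding sq_def nn_def by (intro enn_finite_summable) auto
qed

lemma n2_nonneg: "n2 C f \<ge> 0"
  unfolding n2_def by (rule infsum_nonneg) auto

lemma enn_infsum_mono_set:
  fixes g :: "'a \<Rightarrow> ennreal"
  assumes "C \<subseteq> D"
  shows "infsum g C \<le> infsum g D"
  using assms by (intro enn_infsum_le enn_sum_le_infsum) auto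

lemma enn_infsum_Sigma_finite:
  fixes f :: "'a \<times> 'b \<Rightarrow> ennreal"
  assumes "finite G"
  shows "infsum f (Sigma G B) = (\<Sum>x\<in>G. \<Sum>\<^sub>\<infinity>y\<in>B x. f (x,y))"
  using assms
proof (induction G rule: finite_induct)
  case empty then show ?case by simp
next
  case (insert x G)
  have eq: "Sigma (insert x G) B = Pair x ` B x \<union> Sigma G B" by auto
  have disj: "Pair x ` B x \<inter> Sigma G B = {}" using insert by auto
  have "infsum f (Sigma (insert x G) B) = infsum f (Pair x ` B x) + infsum f (Sigma G B)"
    unfolding eq by (rule infsum_Un_disjoint[OF _ _ disj]) (simp_all add: nonneg_summable_on_complete)
  also have "infsum f (Pair x ` B x) = (\<Sum>\<^sub>\<infinity>y\<in>B x. f (x,y))"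
    by (subst infsum_reindex) (auto simp: inj_on_def o_def)
  finally show ?case using insert by simp
qed

lemma enn_infsum_Sigma:
  fixes f :: "'a \<times> 'b \<Rightarrow> ennreal"
  shows "infsum f (Sigma A B) = (\<Sum>\<^sub>\<infinity>x\<in>A. \<Sum>\<^sub>\<infinity>y\<in>B x. f (x,y))"
proof (rule antisym)
  show "infsum f (Sigma A B) \<le> (\<Sum>\<^sub>\<infinity>x\<in>A. \<Sum>\<^sub>\<infinity>y\<in>B x. f (x,y))"
  proof (rule enn_infsum_le)
    fix F assume F: "finite F" "F \<subseteq> Sigma A B"
    have "sum f F = infsum f F" using F by simp
    also have "\<dots> \<le> infsum f (Sigma (fst ` F) B)"
      using F by (intro enn_infsum_mono_set) force
    also have "\<dots> = (\<Sum>x\<in>fst ` F. \<Sum>\<^sub>\<infinity>y\<in>B x. f (x,y))"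
      using F by (intro enn_infsum_Sigma_finite) auto
    also have "\<dots> \<le> (\<Sum>\<^sub>\<infinity>x\<in>A. \<Sum>\<^sub>\<infinity>y\<in>B x. f (x,y))"
      using F by (intro enn_sum_le_infsum) auto
    finally show "sum f F \<le> (\<Sum>\<^sub>\<infinity>x\<in>A. \<Sum>\<^sub>\<infinity>y\<in>B x. f (x,y))" .
  qed
  show "(\<Sum>\<^sub>\<infinity>x\<in>A. \<Sum>\<^sub>\<infinity>y\<in>B x. f (x,y)) \<le> infsum f (Sigma A B)"
  proof (rule enn_infsum_le)
    fix G assume G: "finite G" "G \<subseteq> A"
    have "(\<Sum>x\<in>G. \<Sum>\<^sub>\<infinity>y\<in>B x. f (x,y)) = infsum f (Sigma G B)"
      using G by (simp add: enn_infsum_Sigma_finite)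
    also have "\<dots> \<le> infsum f (Sigma A B)"
      using G by (intro enn_infsum_mono_set) auto
    finally show "(\<Sum>x\<in>G. \<Sum>\<^sub>\<infinity>y\<in>B x. f (x,y)) \<le> infsum f (Sigma A B)" .
  qed
qed

lemma enn_infsum_UN:
  fixes f :: "'a \<Rightarrow> ennreal"
  assumes "disjoint_family_on B A"
  shows "infsum f (\<Union>x\<in>A. B x) = (\<Sum>\<^sub>\<infinity>x\<in>A. infsum f (B x))"
proof -
  have eq: "(\<Union>x\<in>A. B x) = snd ` Sigma A B" by force
  have inj: "inj_on snd (Sigma A B)"
    using assms unfolding inj_on_def disjoint_family_on_def by force
  have "infsum f (\<Union>x\<in>A. B x) = infsum (f \<circ> snd) (Sigma A B)"
    unfolding eq by (rule infsum_reindex[OF inj])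
  also have "\<dots> = (\<Sum>\<^sub>\<infinity>x\<in>A. infsum f (B x))"
    by (simp add: enn_infsum_Sigma)
  finally show ?thesis .
qed

lemma mult_le_half_sq: "(x::real) * y \<le> (x\<^sup>2 + y\<^sup>2) / 2"
proof -
  have "0 \<le> (x - y)\<^sup>2" by simp
  thus ?thesis by (simp add: power2_eq_square algebra_simps)
qed

lemma sq_prod:
  assumes "sq C f" "sq C g"
  shows "(\<lambda>a. f a * cnj (g a)) summable_on C"
proof (rule abs_summable_summable)
  have s: "(\<lambda>a. (1/2) * ((cmod (f a))\<^sup>2 + (cmod (g a))\<^sup>2)) summable_on C"
    using assms unfolding sq_def by (intro summable_on_cmult_right summable_on_add)
  show "(\<lambda>a. norm (f a * cnj (g a))) summable_on C"
  proof (rule summable_on_comparison_test[OF s])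
    fix a
    show "norm (f a * cnj (g a)) \<le> (1/2) * ((cmod (f a))\<^sup>2 + (cmod (g a))\<^sup>2)"
      using mult_le_half_sq[of "cmod (f a)" "cmod (g a)"] by (simp add: norm_mult)
  qed simp
qed

lemma cmod_add_sq_le: "(cmod (x + y))\<^sup>2 \<le> 2 * (cmod x)\<^sup>2 + 2 * (cmod y)\<^sup>2"
proof -
  have "cmod (x + y) \<le> cmod x + cmod y" by (rule norm_triangle_ineq)
  then have "(cmod (x + y))\<^sup>2 \<le> (cmod x + cmod y)\<^sup>2"
    by (simp add: power_mono)
  also have "\<dots> \<le> 2 * (cmod x)\<^sup>2 + 2 * (cmod y)\<^sup>2"
    using mult_le_half_sq[of "cmod x" "cmod y"] by (simp add: power2_eq_square algebra_simps)
  finally show ?thesis .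
qed

lemma sq_lin:
  assumes "sq C f" "sq C g"
  shows "sq C (\<lambda>a. c * f a + g a)"
proof -
  have s: "(\<lambda>a. (2 * (cmod c)\<^sup>2) * (cmod (f a))\<^sup>2 + 2 * (cmod (g a))\<^sup>2) summable_on C"
    using assms unfolding sq_def by (intro summable_on_cmult_right summable_on_add)
  show ?thesis unfolding sq_def
  proof (rule summable_on_comparison_test[OF s])
    fix a
    show "(cmod (c * f a + g a))\<^sup>2 \<le> (2 * (cmod c)\<^sup>2) * (cmod (f a))\<^sup>2 + 2 * (cmod (g a))\<^sup>2"
      using cmod_add_sq_le[of "c * f a" "g a"] by (simp add: norm_mult power_mult_distrib)
  qed simp
qed

lemma sq_scale: "sq C f \<Longrightarrow> sq C (\<lambda>a. c * f a)"
  using sq_lin[of C f "\<lambda>_. 0" c] by (simp add: sq_def)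

lemma sq_add: "sq C f \<Longrightarrow> sq C g \<Longrightarrow> sq C (\<lambda>a. f a + g a)"
  using sq_lin[of C f g 1] by simp

lemma sq_diff: "sq C f \<Longrightarrow> sq C g \<Longrightarrow> sq C (\<lambda>a. f a - g a)"
  using sq_lin[of C g f "-1"] by simp

lemma sq_cong: "(\<And>a. a \<in> C \<Longrightarrow> f a = g a) \<Longrightarrow> sq C f \<longleftrightarrow> sq C g"
  unfolding sq_def by (intro summable_on_cong) auto

lemma n2_cong: "(\<And>a. a \<in> C \<Longrightarrow> f a = g a) \<Longrightarrow> n2 C f = n2 C g"
  unfolding n2_def by (intro infsum_cong) auto

lemma nn_cong: "(\<And>a. a \<in> C \<Longrightarrow> f a = g a) \<Longrightarrow> nn C f = nn C g"
  unfolding nn_def by (intro infsum_cong) auto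

lemma ip_cong: "(\<And>a. a \<in> C \<Longrightarrow> f a = f' a) \<Longrightarrow> (\<And>a. a \<in> C \<Longrightarrow> g a = g' a) \<Longrightarrow> ip C f g = ip C f' g'"
  unfolding ip_def by (intro infsum_cong) auto

lemma sq_subset: "sq C f \<Longrightarrow> D \<subseteq> C \<Longrightarrow> sq D f"
  unfolding sq_def by (rule summable_on_subset_banach)

lemma sq_zero[simp]: "sq C (\<lambda>_. 0)"
  unfolding sq_def by simp

lemma sq_unit: "sq C (\<lambda>a. if a = w then c else 0)"
  unfolding sq_def by (rule finite_nonzero_values_imp_summable_on) (auto intro: finite_subset[of _ "{w}"])

lemma ip_lin:
  assumes "sq C f" "sq C g" "sq C h"
  shows "ip C (\<lambda>a. c * f a + g a) h = c * ip C f h + ip C g h"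
proof -
  have "ip C (\<lambda>a. c * f a + g a) h = (\<Sum>\<^sub>\<infinity>a\<in>C. c * (f a * cnj (h a)) + g a * cnj (h a))"
    unfolding ip_def by (intro infsum_cong) (simp add: algebra_simps)
  also have "\<dots> = (\<Sum>\<^sub>\<infinity>a\<in>C. c * (f a * cnj (h a))) + (\<Sum>\<^sub>\<infinity>a\<in>C. g a * cnj (h a))"
    using assms by (intro infsum_add summable_on_cmult_right sq_prod)
  also have "\<dots> = c * ip C f h + ip C g h"
    unfolding ip_def using assms by (subst infsum_cmult_right) (auto intro: sq_prod)
  finally show ?thesis .
qed

lemma ip_cnj: "ip C g f = cnj (ip C f g)"
  unfolding ip_def by (subst infsum_cnj[symmetric]) (intro infsum_cong, simp add: mult.commute)

lemma ip_self: "sq C f \<Longrightarrow> ip C f f = complex_of_real (n2 C f)"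
proof -
  assume a: "sq C f"
  have "ip C f f = (\<Sum>\<^sub>\<infinity>a\<in>C. complex_of_real ((cmod (f a))\<^sup>2))"
    unfolding ip_def by (intro infsum_cong) (rule complex_norm_square[symmetric])
  also have "\<dots> = complex_of_real (n2 C f)"
    unfolding n2_def using a unfolding sq_def
    by (intro infsumI has_sum_of_real has_sum_infsum)
  finally show ?thesis .
qed

lemma cmod_expand:
  "(cmod (x + c * y))\<^sup>2 = (cmod x)\<^sup>2 + 2 * Re (cnj c * (x * cnj y)) + (cmod c)\<^sup>2 * (cmod y)\<^sup>2"
  unfolding cmod_power2 by (simp add: power2_eq_square algebra_simps)

lemma n2_expand:
  assumes "sq C f" "sq C g"
  shows "n2 C (\<lambda>a. f a + c * g a) = n2 C f + 2 * Re (cnj c * ip C f g) + (cmod c)\<^sup>2 * n2 C g"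
proof -
  have s1: "(\<lambda>a. (cmod (f a))\<^sup>2) summable_on C" using assms(1) by (simp add: sq_def)
  have s2: "(\<lambda>a. 2 * Re (cnj c * (f a * cnj (g a)))) summable_on C"
    using assms by (intro summable_on_cmult_right summable_on_Re sq_prod)
  have s3: "(\<lambda>a. (cmod c)\<^sup>2 * (cmod (g a))\<^sup>2) summable_on C"
    using assms(2) by (intro summable_on_cmult_right) (simp add: sq_def)
  have "n2 C (\<lambda>a. f a + c * g a) =
      (\<Sum>\<^sub>\<infinity>a\<in>C. (cmod (f a))\<^sup>2 + 2 * Re (cnj c * (f a * cnj (g a))) + (cmod c)\<^sup>2 * (cmod (g a))\<^sup>2)"
    unfolding n2_def by (intro infsum_cong) (rule cmod_expand)
  also have "\<dots> = (\<Sum>\<^sub>\<infinity>a\<in>C. (cmod (f a))\<^sup>2) + (\<Sum>\<^sub>\<infinity>a\<in>C. 2 * Re (cnj c * (f a * cnj (g a))))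
       + (\<Sum>\<^sub>\<infinity>a\<in>C. (cmod c)\<^sup>2 * (cmod (g a))\<^sup>2)"
    using s1 s2 s3 by (simp add: infsum_add summable_on_add)
  also have "(\<Sum>\<^sub>\<infinity>a\<in>C. 2 * Re (cnj c * (f a * cnj (g a)))) = 2 * Re (cnj c * ip C f g)"
  proof -
    have "(\<Sum>\<^sub>\<infinity>a\<in>C. 2 * Re (cnj c * (f a * cnj (g a)))) = 2 * (\<Sum>\<^sub>\<infinity>a\<in>C. Re (cnj c * (f a * cnj (g a))))"
      by (rule infsum_cmult_right') 
    also have "(\<Sum>\<^sub>\<infinity>a\<in>C. Re (cnj c * (f a * cnj (g a)))) = Re (\<Sum>\<^sub>\<infinity>a\<in>C. cnj c * (f a * cnj (g a)))"
      using assms by (intro infsum_Re summable_on_cmult_right sq_prod)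
    also have "(\<Sum>\<^sub>\<infinity>a\<in>C. cnj c * (f a * cnj (g a))) = cnj c * ip C f g"
      unfolding ip_def by (rule infsum_cmult_right')
    finally show ?thesis .
  qed
  also have "(\<Sum>\<^sub>\<infinity>a\<in>C. (cmod c)\<^sup>2 * (cmod (g a))\<^sup>2) = (cmod c)\<^sup>2 * n2 C g"
    unfolding n2_def by (rule infsum_cmult_right')
  finally show ?thesis unfolding n2_def by simp
qed

lemma n2_zero_pt: "sq C f \<Longrightarrow> n2 C f = 0 \<Longrightarrow> a \<in> C \<Longrightarrow> f a = 0"
  unfolding n2_def sq_def
  using nonneg_infsum_le_0D[of "\<lambda>a. (cmod (f a))\<^sup>2" C a] by auto

lemma n2_scale: "n2 C (\<lambda>a. c * f a) = (cmod c)\<^sup>2 * n2 C f"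
  unfolding n2_def by (simp add: norm_mult power_mult_distrib infsum_cmult_right')



lemma ip_lin2:
  assumes "sq C f" "sq C g" "sq C h"
  shows "ip C h (\<lambda>a. c * f a + g a) = cnj c * ip C h f + ip C h g"
proof -
  have "ip C h (\<lambda>a. c * f a + g a) = cnj (ip C (\<lambda>a. c * f a + g a) h)" by (rule ip_cnj)
  also have "\<dots> = cnj (c * ip C f h + ip C g h)" by (simp only: ip_lin[OF assms])
  also have "\<dots> = cnj c * cnj (ip C f h) + cnj (ip C g h)" by simp
  also have "\<dots> = cnj c * ip C h f + ip C h g" by (simp only: ip_cnj[of C h f] ip_cnj[of C h g])
  finally show ?thesis .
qed

lemma ip_unit: "w \<in> C \<Longrightarrow> ip C f (\<lambda>a. if a = w then 1 else 0) = f w"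
proof -
  assume w: "w \<in> C"
  have "ip C f (\<lambda>a. if a = w then 1 else 0) = (\<Sum>\<^sub>\<infinity>a\<in>{w}. f a)"
    unfolding ip_def using w by (intro infsum_cong_neutral) auto
  then show ?thesis by simp
qed

lemma n2_unit: "w \<in> C \<Longrightarrow> n2 C (\<lambda>a. if a = w then 1 else 0) = 1"
proof -
  assume w: "w \<in> C"
  have "n2 C (\<lambda>a. if a = w then 1 else 0) = (\<Sum>\<^sub>\<infinity>a\<in>{w}. 1::real)"
    unfolding n2_def using w by (intro infsum_cong_neutral) auto
  then show ?thesis by simp
qed

lemma n2_split: "w \<in> C \<Longrightarrow> sq C f \<Longrightarrow> n2 C f = (cmod (f w))\<^sup>2 + n2 (C - {w}) f"
proof -
  assume w: "w \<in> C" and s: "sq C f"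
  have "C = insert w (C - {w})" using w by auto
  then have "n2 C f = n2 (insert w (C - {w})) f" by simp
  also have "\<dots> = (cmod (f w))\<^sup>2 + n2 (C - {w}) f"
    unfolding n2_def
    by (rule infsum_insert) (use sq_subset[OF s, of "C - {w}"] in \<open>auto simp: sq_def\<close>)
  finally show ?thesis .
qed

lemma nn_split: "w \<in> C \<Longrightarrow> nn C f = ennreal ((cmod (f w))\<^sup>2) + nn (C - {w}) f"
proof -
  assume w: "w \<in> C"
  have "C = insert w (C - {w})" using w by auto
  then have "nn C f = nn (insert w (C - {w})) f" by simp
  also have "\<dots> = ennreal ((cmod (f w))\<^sup>2) + nn (C - {w}) f"
    unfolding nn_def by (rule infsum_insert) (auto simp: nonneg_summable_on_complete)
  finally show ?thesis .
qed

lemma sq_congI: "sq C f \<Longrightarrow> (\<And>a. a \<in> C \<Longrightarrow> f a = g a) \<Longrightarrow> sq C g"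
  using sq_cong[of C f g] by blast

section \<open>Householder-type unitaries\<close>

definition hth :: "('a \<Rightarrow> complex) \<Rightarrow> 'a \<Rightarrow> complex" where
  "hth s w = (if s w = 0 then 1 else s w / complex_of_real (cmod (s w)))"
definition hv :: "('a \<Rightarrow> complex) \<Rightarrow> 'a \<Rightarrow> 'a \<Rightarrow> complex" where
  "hv s w = (\<lambda>a. cnj (hth s w) * s a - (if a = w then 1 else 0))"
definition hH :: "'a set \<Rightarrow> ('a \<Rightarrow> complex) \<Rightarrow> 'a \<Rightarrow> ('a \<Rightarrow> complex) \<Rightarrow> 'a \<Rightarrow> complex" where
  "hH C s w g = (\<lambda>a. if n2 C (hv s w) = 0 then g a
      else g a - (2 * ip C g (hv s w) / complex_of_real (n2 C (hv s w))) * hv s w a)"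
definition hG :: "'a set \<Rightarrow> ('a \<Rightarrow> complex) \<Rightarrow> 'a \<Rightarrow> ('a \<Rightarrow> complex) \<Rightarrow> 'a \<Rightarrow> complex" where
  "hG C s w g = (\<lambda>a. cnj (hth s w) * hH C s w g a)"
definition hGi :: "'a set \<Rightarrow> ('a \<Rightarrow> complex) \<Rightarrow> 'a \<Rightarrow> ('a \<Rightarrow> complex) \<Rightarrow> 'a \<Rightarrow> complex" where
  "hGi C s w h = hH C s w (\<lambda>a. hth s w * h a)"

lemma hth_norm: "cmod (hth s w) = 1"
  unfolding hth_def by (auto simp: norm_divide)

lemma hth_cnj_mult: "cnj (hth s w) * hth s w = 1"
  using complex_norm_square[of "hth s w"] hth_norm[of s w] by (simp add: mult.commute)

lemma hth_s: "cnj (hth s w) * s w = complex_of_real (cmod (s w))"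
proof (cases "s w = 0")
  case True then show ?thesis by (simp add: hth_def)
next
  case False
  have "cnj (s w) * s w = complex_of_real ((cmod (s w))\<^sup>2)"
    by (metis complex_norm_square mult.commute)
  then show ?thesis using False
    by (simp add: hth_def power2_eq_square field_simps)
qed

locale hh =
  fixes C :: "'a set" and s :: "'a \<Rightarrow> complex" and w :: 'a
  assumes w: "w \<in> C" and sqs: "sq C s" and ns: "n2 C s = 1"
begin

abbreviation "th \<equiv> hth s w"
abbreviation "v \<equiv> hv s w"
abbreviation "nv \<equiv> n2 C (hv s w)"

lemma sq_v: "sq C v"
proof -
  have "sq C (\<lambda>a. (-1) * (if a = w then 1 else 0) + cnj th * s a)"
    by (intro sq_lin sq_unit sq_scale sqs)
  then show ?thesis by (rule sq_congI) (simp add: hv_def)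
qed

lemma sq_t: "sq C (\<lambda>a. cnj th * s a)"
  by (intro sq_scale sqs)

lemma nv_eq: "nv = 2 - 2 * cmod (s w)"
proof -
  have "nv = n2 C (\<lambda>a. cnj th * s a + (-1) * (if a = w then 1 else 0))"
    unfolding hv_def by (intro n2_cong) simp
  also have "\<dots> = n2 C (\<lambda>a. cnj th * s a) + 2 * Re (cnj (-1) * ip C (\<lambda>a. cnj th * s a) (\<lambda>a. if a = w then 1 else 0))
      + (cmod (-1))\<^sup>2 * n2 C (\<lambda>a. if a = w then 1 else 0)"
    by (rule n2_expand) (intro sq_t, rule sq_unit)
  also have "\<dots> = 2 - 2 * cmod (s w)"
  proof -
    have e1: "ip C (\<lambda>a. cnj th * s a) (\<lambda>a. if a = w then 1 else 0) = complex_of_real (cmod (s w))"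
      using ip_unit[OF w, of "\<lambda>a. cnj th * s a"] hth_s[of s w] by simp
    have e2: "n2 C (\<lambda>a. cnj th * s a) = 1"
      using n2_scale[of C "cnj th" s] hth_norm[of s w] ns by simp
    have e3: "n2 C (\<lambda>a. if a = w then 1 else 0) = 1" by (rule n2_unit[OF w])
    show ?thesis unfolding e1 e2 e3 by simp
  qed
  finally show ?thesis .
qed

lemma sq_hH: "sq C g \<Longrightarrow> sq C (hH C s w g)"
proof -
  assume g: "sq C g"
  show ?thesis
  proof (cases "nv = 0")
    case True
    show ?thesis using g by (rule sq_congI) (simp add: hH_def True)
  next
    case False
    have "sq C (\<lambda>a. (- (2 * ip C g v / complex_of_real nv)) * v a + g a)"
      by (intro sq_lin sq_v g)
    then show ?thesis by (rule sq_congI) (simp add: hH_def False)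
  qed
qed

lemma hH_n2: "sq C g \<Longrightarrow> n2 C (hH C s w g) = n2 C g"
proof (cases "nv = 0")
  case True then show "sq C g \<Longrightarrow> ?thesis" unfolding hH_def by simp
next
  case False
  assume g: "sq C g"
  define z where "z = ip C g v"
  define c where "c = - (2 * z / complex_of_real nv)"
  have nvpos: "nv > 0" using False n2_nonneg[of C v] by simp
  have key: "2 * Re (cnj c * z) + (cmod c)\<^sup>2 * nv = 0"
  proof -
    have zz: "cnj z * z = complex_of_real ((cmod z)\<^sup>2)" by (metis complex_norm_square mult.commute)
    have "cnj c * z = - (2 * (cnj z * z) / complex_of_real nv)" unfolding c_def by simp
    also have "\<dots> = - complex_of_real (2 * (cmod z)\<^sup>2 / nv)" unfolding zz by simp
    finally have r1: "Re (cnj c * z) = - (2 * (cmod z)\<^sup>2 / nv)" by simp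
    have "cmod c = 2 * cmod z / nv" unfolding c_def using nvpos by (simp add: norm_divide norm_mult)
    then have r2: "(cmod c)\<^sup>2 * nv = 4 * (cmod z)\<^sup>2 / nv"
      using nvpos by (simp add: power2_eq_square field_simps)
    show ?thesis unfolding r2 r1 by simp
  qed
  have "n2 C (hH C s w g) = n2 C (\<lambda>a. g a + c * v a)"
    unfolding hH_def c_def z_def using False by (intro n2_cong) simp
  also have "\<dots> = n2 C g + 2 * Re (cnj c * z) + (cmod c)\<^sup>2 * nv"
    unfolding z_def by (rule n2_expand[OF g sq_v])
  also have "\<dots> = n2 C g" using key by simp
  finally show ?thesis .
qed

lemma hH_ip_v: "sq C g \<Longrightarrow> nv \<noteq> 0 \<Longrightarrow> ip C (hH C s w g) v = - ip C g v"
proof -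
  assume g: "sq C g" and nz: "nv \<noteq> 0"
  have "ip C (hH C s w g) v = ip C (\<lambda>a. (- (2 * ip C g v / complex_of_real nv)) * v a + g a) v"
    unfolding hH_def using nz by (intro ip_cong) auto
  also have "\<dots> = (- (2 * ip C g v / complex_of_real nv)) * ip C v v + ip C g v"
    by (rule ip_lin[OF sq_v g sq_v])
  also have "\<dots> = - ip C g v"
    using nz by (simp add: ip_self[OF sq_v])
  finally show ?thesis .
qed

lemma hH_invol: "sq C g \<Longrightarrow> hH C s w (hH C s w g) = g"
proof (cases "nv = 0")
  case True then show "sq C g \<Longrightarrow> ?thesis" unfolding hH_def by simp
next
  case False
  assume g: "sq C g"
  have ipv: "ip C (hH C s w g) v = - ip C g v" by (rule hH_ip_v[OF g False])
  show ?thesis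
  proof
    fix a
    have "hH C s w (hH C s w g) a = hH C s w g a - (2 * ip C (hH C s w g) v / complex_of_real nv) * v a"
      using False by (simp only: hH_def[of C s w "hH C s w g"] if_False)
    also have "\<dots> = hH C s w g a + (2 * ip C g v / complex_of_real nv) * v a"
      unfolding ipv by simp
    also have "\<dots> = g a"
      using False by (simp add: hH_def)
    finally show "hH C s w (hH C s w g) a = g a" .
  qed
qed

lemma hH_w: "sq C g \<Longrightarrow> hH C s w g w = ip C g (\<lambda>a. cnj th * s a)"
proof (cases "nv = 0")
  case True
  assume g: "sq C g"
  have v0: "\<And>a. a \<in> C \<Longrightarrow> v a = 0" using n2_zero_pt[OF sq_v True] .
  have "ip C g (\<lambda>a. cnj th * s a) = ip C g (\<lambda>a. if a = w then 1 else 0)"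
    using v0 by (intro ip_cong) (auto simp: hv_def)
  also have "\<dots> = g w" using ip_unit[OF w] .
  finally show ?thesis using True by (simp add: hH_def)
next
  case False
  assume g: "sq C g"
  have "ip C g v = ip C g (\<lambda>a. (-1) * (if a = w then 1 else 0) + cnj th * s a)"
    unfolding hv_def by (intro ip_cong) auto
  also have "\<dots> = cnj (-1) * ip C g (\<lambda>a. if a = w then 1 else 0) + ip C g (\<lambda>a. cnj th * s a)"
    by (rule ip_lin2[OF sq_unit sq_t g])
  finally have ipv: "ip C g v = ip C g (\<lambda>a. cnj th * s a) - g w" using ip_unit[OF w, of g] by simp
  have vw: "v w = complex_of_real (cmod (s w)) - 1"
    unfolding hv_def by (simp add: hth_s)
  have "hH C s w g w = g w - (2 * ip C g v / complex_of_real nv) * v w"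
    using False by (simp add: hH_def)
  also have "\<dots> = g w + ip C g v"
    using False unfolding vw nv_eq by (simp add: field_simps)
  finally show ?thesis using ipv by simp
qed

lemma sq_hG: "sq C g \<Longrightarrow> sq C (hG C s w g)"
  unfolding hG_def by (intro sq_scale sq_hH)

lemma hG_n2: "sq C g \<Longrightarrow> n2 C (hG C s w g) = n2 C g"
  unfolding hG_def by (simp add: n2_scale hth_norm hH_n2)

lemma hG_w: "sq C g \<Longrightarrow> hG C s w g w = ip C g s"
proof -
  assume g: "sq C g"
  have "ip C g (\<lambda>a. cnj th * s a) = th * ip C g s"
    using ip_lin2[OF sqs sq_zero g, of "cnj th"] by (simp add: ip_def)
  then have "hG C s w g w = cnj th * (th * ip C g s)" unfolding hG_def using hH_w[OF g] by simp
  also have "\<dots> = (cnj th * th) * ip C g s" by (simp add: mult.assoc)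
  finally show ?thesis using hth_cnj_mult[of s w] by simp
qed

lemma hH_lin: "sq C f \<Longrightarrow> sq C g \<Longrightarrow> hH C s w (\<lambda>a. c * f a + g a) a = c * hH C s w f a + hH C s w g a"
proof (cases "nv = 0")
  case True then show ?thesis unfolding hH_def by simp
next
  case False
  assume fg: "sq C f" "sq C g"
  have e: "ip C (\<lambda>a. c * f a + g a) v = c * ip C f v + ip C g v" by (rule ip_lin[OF fg sq_v])
  have "hH C s w (\<lambda>a. c * f a + g a) a = (c * f a + g a) - (2 * (c * ip C f v + ip C g v) / complex_of_real nv) * v a"
    using False by (simp only: hH_def e if_False)
  also have "\<dots> = c * (f a - (2 * ip C f v / complex_of_real nv) * v a) + (g a - (2 * ip C g v / complex_of_real nv) * v a)"
    by (simp add: ring_distribs add_divide_distrib)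
  also have "\<dots> = c * hH C s w f a + hH C s w g a"
    using False by (simp add: hH_def)
  finally show ?thesis .
qed

lemma hH_zero: "hH C s w (\<lambda>_. 0) a = 0"
  unfolding hH_def ip_def by simp

lemma hG_lin: "sq C f \<Longrightarrow> sq C g \<Longrightarrow> hG C s w (\<lambda>a. c * f a + g a) a = c * hG C s w f a + hG C s w g a"
proof -
  assume fg: "sq C f" "sq C g"
  have "hG C s w (\<lambda>a. c * f a + g a) a = cnj th * (c * hH C s w f a + hH C s w g a)"
    unfolding hG_def hH_lin[OF fg] ..
  then show ?thesis unfolding hG_def by (simp add: algebra_simps)
qed

lemma hG_scale: "sq C f \<Longrightarrow> hG C s w (\<lambda>a. c * f a) a = c * hG C s w f a"
  using hG_lin[of f "\<lambda>_. 0" c a] by (simp add: hG_def hH_zero)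

lemma hH_cong: "(\<And>a. a \<in> C \<Longrightarrow> f a = g a) \<Longrightarrow> f b = g b \<Longrightarrow> hH C s w f b = hH C s w g b"
proof -
  assume a: "\<And>a. a \<in> C \<Longrightarrow> f a = g a" "f b = g b"
  have "ip C f v = ip C g v" by (rule ip_cong) (use a in auto)
  then show ?thesis unfolding hH_def using a by simp
qed

lemma hG_cong: "(\<And>a. a \<in> C \<Longrightarrow> f a = g a) \<Longrightarrow> b \<in> C \<Longrightarrow> hG C s w f b = hG C s w g b"
proof -
  assume a: "\<And>a. a \<in> C \<Longrightarrow> f a = g a" "b \<in> C"
  have "hH C s w f b = hH C s w g b" by (rule hH_cong) (use a in auto)
  then show ?thesis unfolding hG_def by simp
qed

lemma sq_hGi: "sq C h \<Longrightarrow> sq C (hGi C s w h)"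
  unfolding hGi_def by (intro sq_hH sq_scale)

lemma hGi_n2: "sq C h \<Longrightarrow> n2 C (hGi C s w h) = n2 C h"
  unfolding hGi_def by (simp add: hH_n2 sq_scale n2_scale hth_norm)

lemma hG_hGi: "sq C h \<Longrightarrow> hG C s w (hGi C s w h) a = h a"
proof -
  assume h: "sq C h"
  have "hG C s w (hGi C s w h) a = cnj th * (th * h a)"
    unfolding hG_def hGi_def hH_invol[OF sq_scale[OF h]] ..
  also have "\<dots> = (cnj th * th) * h a" by (simp add: mult.assoc)
  finally show ?thesis using hth_cnj_mult[of s w] by simp
qed

lemma hG_s: "a \<in> C \<Longrightarrow> a \<noteq> w \<Longrightarrow> hG C s w s a = 0"
proof -
  assume a: "a \<in> C" "a \<noteq> w"
  have n: "n2 C (hG C s w s) = 1" using hG_n2[OF sqs] ns by simp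
  have ww: "hG C s w s w = 1" using hG_w[OF sqs] ip_self[OF sqs] ns by simp
  have "n2 C (hG C s w s) = (cmod (hG C s w s w))\<^sup>2 + n2 (C - {w}) (hG C s w s)"
    by (rule n2_split[OF w sq_hG[OF sqs]])
  then have "n2 (C - {w}) (hG C s w s) = 0" using n ww by simp
  then show ?thesis
    using n2_zero_pt[OF sq_subset[OF sq_hG[OF sqs]], of "C - {w}" a] a by auto
qed

lemma hG_norm_split: "sq C g \<Longrightarrow> n2 C g = (cmod (ip C g s))\<^sup>2 + n2 (C - {w}) (hG C s w g)"
  using n2_split[OF w sq_hG, of g] hG_n2[of g] hG_w[of g] by simp

end



section \<open>The tree setting\<close>

locale tr =
  fixes par :: "'v \<Rightarrow> 'v" and rt :: 'v and lam :: "'v \<Rightarrow> complex" and al :: "'v \<Rightarrow> real"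
  assumes tree: "rooted_tree par rt"
    and bdd: "bounded_on_l2 UNIV (tree_shift par rt lam)"
    and twoiso: "two_isometry UNIV (tree_shift par rt lam)"
    and apos: "\<forall>v. al v \<ge> 0"
    and anorm: "\<forall>u. u \<noteq> rt \<longrightarrow> l2_norm (tree_shift par rt lam (unit_vec u)) = al (par u)"
begin

abbreviation "S \<equiv> tree_shift par rt lam"
abbreviation "Chi \<equiv> children par rt"

definition dep :: "'v \<Rightarrow> nat" where "dep v = (LEAST n. (par ^^ n) v = rt)"

lemma par_rt: "par rt = rt" using tree by (simp add: rooted_tree_def)
lemma reach: "\<exists>n. (par ^^ n) v = rt" using tree by (simp add: rooted_tree_def)

lemma dep_rt: "dep rt = 0"
  unfolding dep_def by (rule Least_eq_0) simp

lemma dep_spec: "(par ^^ dep v) v = rt"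
  unfolding dep_def by (rule LeastI_ex[OF reach])

lemma dep_le: "(par ^^ n) v = rt \<Longrightarrow> dep v \<le> n"
  unfolding dep_def by (rule Least_le)

lemma dep_par: "v \<noteq> rt \<Longrightarrow> dep v = Suc (dep (par v))"
proof -
  assume v: "v \<noteq> rt"
  have "(par ^^ Suc (dep (par v))) v = rt"
    using dep_spec[of "par v"] by (simp only: funpow_Suc_right comp_def)
  then have le: "dep v \<le> Suc (dep (par v))" by (rule dep_le)
  obtain n where n: "dep v = Suc n"
    using v dep_spec[of v] by (cases "dep v") auto
  then have "(par ^^ n) (par v) = rt" using dep_spec[of v] by (simp only: funpow_Suc_right comp_def)
  then have "dep (par v) \<le> n" by (rule dep_le)
  with le n show ?thesis by simp
qed

lemma chi_iff: "c \<in> Chi u \<longleftrightarrow> c \<noteq> rt \<and> par c = u"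
  by (simp add: children_def)

lemma dep_chi: "c \<in> Chi u \<Longrightarrow> dep c = Suc (dep u)"
  using dep_par chi_iff by auto

lemma dep0: "dep v = 0 \<longleftrightarrow> v = rt"
  using dep_par dep_rt by (cases "v = rt") auto

lemma rt_notin_chi: "rt \<notin> Chi u" by (simp add: chi_iff)

lemma chi_disj: "disjoint_family_on Chi Y"
  unfolding disjoint_family_on_def by (auto simp: chi_iff)

lemma UNIV_split: "UNIV = insert rt (\<Union>u\<in>UNIV. Chi u)"
  by (auto simp: chi_iff)

lemma dep_le_split: "{v. dep v \<le> Suc K} = insert rt (\<Union>u\<in>{u. dep u \<le> K}. Chi u)"
proof (intro set_eqI iffI)
  fix v assume "v \<in> {v. dep v \<le> Suc K}"
  then show "v \<in> insert rt (\<Union>u\<in>{u. dep u \<le> K}. Chi u)"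
    using dep_par[of v] by (cases "v = rt") (auto simp: chi_iff)
next
  fix v assume "v \<in> insert rt (\<Union>u\<in>{u. dep u \<le> K}. Chi u)"
  then show "v \<in> {v. dep v \<le> Suc K}"
    using dep_rt dep_chi by auto
qed

lemma nn_tree_split:
  "nn (insert rt (\<Union>u\<in>Y. Chi u)) f = ennreal ((cmod (f rt))\<^sup>2) + (\<Sum>\<^sub>\<infinity>u\<in>Y. nn (Chi u) f)"
proof -
  have "nn (insert rt (\<Union>u\<in>Y. Chi u)) f = ennreal ((cmod (f rt))\<^sup>2) + nn (\<Union>u\<in>Y. Chi u) f"
    unfolding nn_def by (rule infsum_insert) (auto simp: nonneg_summable_on_complete chi_iff)
  also have "nn (\<Union>u\<in>Y. Chi u) f = (\<Sum>\<^sub>\<infinity>u\<in>Y. nn (Chi u) f)"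
    unfolding nn_def by (rule enn_infsum_UN[OF chi_disj])
  finally show ?thesis .
qed

lemma nn_UNIV_split: "nn UNIV f = ennreal ((cmod (f rt))\<^sup>2) + (\<Sum>\<^sub>\<infinity>u. nn (Chi u) f)"
  using nn_tree_split[of UNIV f] UNIV_split by simp

lemma S_rt: "S f rt = 0" by (simp add: tree_shift_def)
lemma S_chi: "c \<in> Chi u \<Longrightarrow> S f c = lam c * f u" by (simp add: tree_shift_def chi_iff)
lemma S_unit: "S (unit_vec u) v = (if v \<in> Chi u then lam v else 0)"
  by (auto simp: tree_shift_def unit_vec_def chi_iff)

lemma l2_UNIV: "f \<in> l2 UNIV \<longleftrightarrow> sq UNIV f"
  by (simp add: l2_def sq_def)

lemma sq_unit_vec: "sq C (unit_vec u)"
  unfolding unit_vec_def by (rule sq_unit)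

lemma S_l2: "sq UNIV f \<Longrightarrow> sq UNIV (S f)"
proof -
  assume "sq UNIV f"
  then have "f \<in> l2 UNIV" by (simp add: l2_UNIV)
  then have "S f \<in> l2 UNIV" using bdd unfolding bounded_on_l2_def by blast
  then show ?thesis by (simp add: l2_UNIV)
qed

lemma S_lin: "sq UNIV f \<Longrightarrow> sq UNIV g \<Longrightarrow> S (\<lambda>a. c * f a + g a) = (\<lambda>a. c * S f a + S g a)"
  by (auto simp: tree_shift_def fun_eq_iff algebra_simps)

lemma sq_lam: "sq (Chi u) lam"
proof -
  have "sq UNIV (S (unit_vec u))" by (intro S_l2 sq_unit_vec)
  then have "sq (Chi u) (S (unit_vec u))" by (rule sq_subset) simp
  then show ?thesis by (rule sq_congI) (simp add: S_unit)
qed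

definition aa :: "'v \<Rightarrow> real" where "aa u = n2 (Chi u) lam"

lemma aa_nonneg: "aa u \<ge> 0" unfolding aa_def by (rule n2_nonneg)

lemma n2_Se: "n2 UNIV (S (unit_vec u)) = aa u"
  unfolding n2_def aa_def by (rule infsum_cong_neutral) (auto simp: S_unit)

lemma l2_norm_n2: "l2_norm f = sqrt (n2 UNIV f)"
  by (simp add: l2_norm_def n2_def)

lemma l2_inner_ip: "l2_inner f g = ip UNIV f g"
  by (simp add: l2_inner_def ip_def)

lemma nn_S: "nn UNIV (S g) = (\<Sum>\<^sub>\<infinity>u. ennreal ((cmod (g u))\<^sup>2 * aa u))"
proof -
  have "nn UNIV (S g) = ennreal ((cmod (S g rt))\<^sup>2) + (\<Sum>\<^sub>\<infinity>u. nn (Chi u) (S g))"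
    by (rule nn_UNIV_split)
  also have "\<dots> = (\<Sum>\<^sub>\<infinity>u. nn (Chi u) (S g))" by (simp add: S_rt)
  also have "\<dots> = (\<Sum>\<^sub>\<infinity>u. ennreal ((cmod (g u))\<^sup>2 * aa u))"
  proof (rule infsum_cong)
    fix u
    have "nn (Chi u) (S g) = nn (Chi u) (\<lambda>c. g u * lam c)"
      by (rule nn_cong) (simp add: S_chi mult.commute)
    also have "\<dots> = ennreal (n2 (Chi u) (\<lambda>c. g u * lam c))"
      by (rule nn_sq) (intro sq_scale sq_lam)
    also have "\<dots> = ennreal ((cmod (g u))\<^sup>2 * aa u)"
      by (simp add: n2_scale aa_def)
    finally show "nn (Chi u) (S g) = ennreal ((cmod (g u))\<^sup>2 * aa u)" .
  qed
  finally show ?thesis .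
qed

lemma aa_child: "w \<in> Chi u \<Longrightarrow> aa w = (al u)\<^sup>2"
proof -
  assume w: "w \<in> Chi u"
  then have "w \<noteq> rt" "par w = u" by (auto simp: chi_iff)
  then have "sqrt (aa w) = al u" using anorm[rule_format, of w] n2_Se[of w] by (simp add: l2_norm_n2)
  then show ?thesis using aa_nonneg[of w] by (metis real_sqrt_pow2)
qed

lemma n2_SSe: "n2 UNIV (S (S (unit_vec u))) = (al u)\<^sup>2 * aa u"
proof -
  have sq2: "sq UNIV (S (S (unit_vec u)))" by (intro S_l2 sq_unit_vec)
  have "ennreal (n2 UNIV (S (S (unit_vec u)))) = nn UNIV (S (S (unit_vec u)))"
    by (rule nn_sq[OF sq2, symmetric])
  also have "\<dots> = (\<Sum>\<^sub>\<infinity>w. ennreal ((cmod (S (unit_vec u) w))\<^sup>2 * aa w))" by (rule nn_S)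
  also have "\<dots> = (\<Sum>\<^sub>\<infinity>w. ennreal ((cmod (complex_of_real (al u) * S (unit_vec u) w))\<^sup>2))"
  proof (rule infsum_cong)
    fix w
    show "ennreal ((cmod (S (unit_vec u) w))\<^sup>2 * aa w) =
          ennreal ((cmod (complex_of_real (al u) * S (unit_vec u) w))\<^sup>2)"
      by (cases "w \<in> Chi u") (auto simp: S_unit aa_child norm_mult power_mult_distrib mult.commute)
  qed
  also have "\<dots> = nn UNIV (\<lambda>w. complex_of_real (al u) * S (unit_vec u) w)"
    by (simp add: nn_def)
  also have "\<dots> = ennreal (n2 UNIV (\<lambda>w. complex_of_real (al u) * S (unit_vec u) w))"
    by (rule nn_sq) (intro sq_scale S_l2 sq_unit_vec)
  also have "\<dots> = ennreal ((al u)\<^sup>2 * aa u)"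
    by (simp add: n2_scale n2_Se)
  finally have "ennreal (n2 UNIV (S (S (unit_vec u)))) = ennreal ((al u)\<^sup>2 * aa u)" .
  moreover have "0 \<le> (al u)\<^sup>2 * aa u" using aa_nonneg[of u] by simp
  ultimately show ?thesis using n2_nonneg[of UNIV "S (S (unit_vec u))"] by (simp add: ennreal_inj)
qed

lemma eq2: "1 - 2 * aa u + (al u)\<^sup>2 * aa u = 0"
proof -
  have e: "sq UNIV (unit_vec u)" by (rule sq_unit_vec)
  have el: "unit_vec u \<in> l2 UNIV" using e by (simp add: l2_UNIV)
  have "l2_inner (unit_vec u) (unit_vec u) - 2 * l2_inner (S (unit_vec u)) (S (unit_vec u))
        + l2_inner (S (S (unit_vec u))) (S (S (unit_vec u))) = 0"
    using twoiso[unfolded two_isometry_def, rule_format, OF el el] .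
  moreover have "l2_inner (unit_vec u) (unit_vec u) = 1"
    unfolding l2_inner_ip ip_self[OF e] by (simp add: unit_vec_def n2_unit)
  moreover have "l2_inner (S (unit_vec u)) (S (unit_vec u)) = complex_of_real (aa u)"
    unfolding l2_inner_ip ip_self[OF S_l2[OF e]] n2_Se ..
  moreover have "l2_inner (S (S (unit_vec u))) (S (S (unit_vec u))) = complex_of_real ((al u)\<^sup>2 * aa u)"
    unfolding l2_inner_ip ip_self[OF S_l2[OF S_l2[OF e]]] n2_SSe ..
  ultimately have "complex_of_real (1 - 2 * aa u + (al u)\<^sup>2 * aa u) = 0" by simp
  then show ?thesis by (simp only: of_real_eq_0_iff)
qed

lemma aa_pos: "aa u > 0"
proof -
  have "aa u \<noteq> 0" using eq2[of u] by auto
  then show ?thesis using aa_nonneg[of u] by simp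
qed

lemma chi_ne: "Chi u \<noteq> {}"
proof
  assume "Chi u = {}"
  then have "aa u = 0" by (simp add: aa_def n2_def)
  then show False using aa_pos[of u] by simp
qed

lemma rec_eq: "w \<in> Chi u \<Longrightarrow> 1 - 2 * aa u + aa w * aa u = 0"
  using eq2[of u] aa_child[of w u] by simp

lemma exists_dep: "\<exists>u. dep u = n"
proof (induction n)
  case 0 then show ?case using dep_rt by blast
next
  case (Suc n)
  then obtain u where u: "dep u = n" by blast
  obtain c where "c \<in> Chi u" using chi_ne[of u] by blast
  then show ?case using dep_chi u by blast
qed

lemma div_div_cancel: "(D::real) \<noteq> 0 \<Longrightarrow> (a / D) / (b / D) = a / b"
  by (cases "b = 0") (simp_all add: field_simps)

definition tt :: real where "tt = aa rt - 1"
definition qq :: "nat \<Rightarrow> real" where "qq n = (1 + (real n + 1) * tt) / (1 + real n * tt)"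

lemma closed_form: "1 + real n * tt > 0 \<and> (\<forall>u. dep u = n \<longrightarrow> aa u = qq n)"
proof (induction n)
  case 0
  have "\<forall>u. dep u = 0 \<longrightarrow> aa u = qq 0" using dep0 by (auto simp: qq_def tt_def)
  then show ?case by simp
next
  case (Suc n)
  then have D: "1 + real n * tt > 0" and IH: "\<And>u. dep u = n \<Longrightarrow> aa u = qq n" by auto
  obtain u0 where u0: "dep u0 = n" using exists_dep by blast
  have "qq n > 0" using IH[OF u0] aa_pos[of u0] by simp
  then have N: "1 + (real n + 1) * tt > 0" using D unfolding qq_def
    by (simp add: zero_less_divide_iff)
  have "\<forall>v. dep v = Suc n \<longrightarrow> aa v = qq (Suc n)"
  proof (intro allI impI)
    fix v assume v: "dep v = Suc n"
    then have "v \<noteq> rt" using dep_rt by auto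
    then have vc: "v \<in> Chi (par v)" and dp: "dep (par v) = n"
      using dep_par[of v] v by (auto simp: chi_iff)
    have au: "aa (par v) = qq n" using IH[OF dp] .
    have r: "1 - 2 * aa (par v) + aa v * aa (par v) = 0" by (rule rec_eq[OF vc])
    have "aa v = (2 * qq n - 1) / qq n"
      using r au \<open>qq n > 0\<close> by (simp add: field_simps)
    also have "\<dots> = qq (Suc n)"
    proof -
      define Dn where "Dn = 1 + real n * tt"
      define Nn where "Nn = 1 + (real n + 1) * tt"
      have q: "qq n = Nn / Dn" by (simp add: qq_def Dn_def Nn_def)
      have Dp: "Dn > 0" using D by (simp add: Dn_def)
      have Np: "Nn > 0" using N by (simp add: Nn_def)
      have "(2 * (Nn / Dn) - 1) / (Nn / Dn) = (2 * Nn - Dn) / Nn"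
        using Dp Np by (simp add: field_simps)
      moreover have r: "qq (Suc n) = (2 * Nn - Dn) / Nn"
        unfolding qq_def Dn_def Nn_def by (simp add: algebra_simps)
      ultimately show ?thesis by (simp only: q r)
    qed
    finally show "aa v = qq (Suc n)" .
  qed
  moreover have "1 + real (Suc n) * tt > 0" using N by (simp add: add.commute)
  ultimately show ?case by simp
qed

lemma D_pos: "1 + real n * tt > 0" using closed_form by blast
lemma aa_qq: "aa u = qq (dep u)" using closed_form by blast
lemma qq_pos: "qq n > 0"
  using aa_qq aa_pos exists_dep by metis

definition x0 :: real where "x0 = l2_norm (S (unit_vec rt))"

lemma x0_eq: "x0 = sqrt (aa rt)" by (simp add: x0_def l2_norm_n2 n2_Se)

lemma x0_sq: "x0\<^sup>2 - 1 = tt" using aa_nonneg[of rt] by (simp add: x0_eq tt_def)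

lemma xi_x0: "xi n x0 = sqrt (qq n)"
  unfolding xi_def x0_sq qq_def by (simp add: add.commute)

lemma xi_dep: "sqrt (aa u) = xi (dep u) x0"
  by (simp add: xi_x0 aa_qq)

lemma xi_comp: "xi m (xi k x0) = xi (k + m) x0"
proof -
  have q: "(xi k x0)\<^sup>2 = qq k" using qq_pos[of k] by (simp add: xi_x0)
  have Dk: "1 + real k * tt > 0" by (rule D_pos)
  have Dkm: "1 + real (k + m) * tt > 0" by (rule D_pos)
  define Dk' where "Dk' = 1 + real k * tt"
  have qk: "qq k - 1 = tt / Dk'" using Dk unfolding qq_def Dk'_def by (simp add: field_simps)
  have e1: "1 + real (m + 1) * (qq k - 1) = (1 + (real (k + m) + 1) * tt) / Dk'"
    unfolding qk using Dk unfolding Dk'_def by (simp add: field_simps)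
  have e2: "1 + real m * (qq k - 1) = (1 + real (k + m) * tt) / Dk'"
    unfolding qk using Dk unfolding Dk'_def by (simp add: field_simps)
  have "(1 + real (m + 1) * ((xi k x0)\<^sup>2 - 1)) / (1 + real m * ((xi k x0)\<^sup>2 - 1))
      = ((1 + (real (k + m) + 1) * tt) / Dk') / ((1 + real (k + m) * tt) / Dk')"
    unfolding q e1 e2 ..
  also have "\<dots> = (1 + (real (k + m) + 1) * tt) / (1 + real (k + m) * tt)"
    by (rule div_div_cancel) (use Dk in \<open>simp add: Dk'_def\<close>)
  also have "\<dots> = qq (k + m)" by (simp add: qq_def)
  finally have "(1 + real (m + 1) * ((xi k x0)\<^sup>2 - 1)) / (1 + real m * ((xi k x0)\<^sup>2 - 1)) = qq (k + m)" .
  then show ?thesis unfolding xi_def[of m] by (simp add: xi_x0)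
qed

end



context tr
begin

definition wu :: "'v \<Rightarrow> 'v" where "wu u = (SOME w. w \<in> Chi u)"
definition su :: "'v \<Rightarrow> 'v \<Rightarrow> complex" where
  "su u = (\<lambda>a. complex_of_real (1 / sqrt (aa u)) * lam a)"
definition GG :: "'v \<Rightarrow> ('v \<Rightarrow> complex) \<Rightarrow> 'v \<Rightarrow> complex" where
  "GG u g = hG (Chi u) (su u) (wu u) g"
definition AA :: "('v \<Rightarrow> complex) \<Rightarrow> 'v \<Rightarrow> complex" where
  "AA g = (\<lambda>u. ip (Chi u) g (su u))"

lemma wu_in: "wu u \<in> Chi u"
  unfolding wu_def using chi_ne[of u] by (simp add: some_in_eq)

lemma sq_su: "sq (Chi u) (su u)"
  unfolding su_def by (intro sq_scale sq_lam)

lemma n2_su: "n2 (Chi u) (su u) = 1"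
proof -
  have "n2 (Chi u) (su u) = (cmod (complex_of_real (1 / sqrt (aa u))))\<^sup>2 * n2 (Chi u) lam"
    unfolding su_def by (rule n2_scale)
  also have "\<dots> = (1 / sqrt (aa u))\<^sup>2 * aa u"
    by (simp only: norm_of_real power2_abs aa_def)
  also have "\<dots> = 1" using aa_pos[of u] by (simp add: power_divide)
  finally show ?thesis .
qed

lemma hhu: "hh (Chi u) (su u) (wu u)"
  by unfold_locales (rule wu_in, rule sq_su, rule n2_su)

lemma sq_chi: "sq UNIV g \<Longrightarrow> sq (Chi u) g"
  by (rule sq_subset) auto

lemma nn_chi_split:
  assumes g: "sq UNIV g"
  shows "nn (Chi u) g = ennreal ((cmod (AA g u))\<^sup>2) + nn (Chi u - {wu u}) (GG u g)"
proof -
  interpret hh "Chi u" "su u" "wu u" by (rule hhu)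
  have gc: "sq (Chi u) g" by (rule sq_chi[OF g])
  have sG: "sq (Chi u - {wu u}) (GG u g)"
    unfolding GG_def by (rule sq_subset[OF sq_hG[OF gc]]) auto
  have "nn (Chi u) g = ennreal (n2 (Chi u) g)" by (rule nn_sq[OF gc])
  also have "\<dots> = ennreal ((cmod (AA g u))\<^sup>2 + n2 (Chi u - {wu u}) (GG u g))"
    using hG_norm_split[OF gc] by (simp add: AA_def GG_def)
  also have "\<dots> = ennreal ((cmod (AA g u))\<^sup>2) + ennreal (n2 (Chi u - {wu u}) (GG u g))"
    by (rule ennreal_plus) (auto simp: n2_nonneg)
  also have "ennreal (n2 (Chi u - {wu u}) (GG u g)) = nn (Chi u - {wu u}) (GG u g)"
    by (rule nn_sq[OF sG, symmetric])
  finally show ?thesis .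
qed

lemma star:
  assumes g: "sq UNIV g"
  shows "nn UNIV g = ennreal ((cmod (g rt))\<^sup>2) + nn UNIV (AA g) + (\<Sum>\<^sub>\<infinity>u. nn (Chi u - {wu u}) (GG u g))"
proof -
  have "nn UNIV g = ennreal ((cmod (g rt))\<^sup>2) + (\<Sum>\<^sub>\<infinity>u. nn (Chi u) g)" by (rule nn_UNIV_split)
  also have "(\<Sum>\<^sub>\<infinity>u. nn (Chi u) g) = (\<Sum>\<^sub>\<infinity>u. ennreal ((cmod (AA g u))\<^sup>2) + nn (Chi u - {wu u}) (GG u g))"
    by (rule infsum_cong) (rule nn_chi_split[OF g])
  also have "\<dots> = (\<Sum>\<^sub>\<infinity>u. ennreal ((cmod (AA g u))\<^sup>2)) + (\<Sum>\<^sub>\<infinity>u. nn (Chi u - {wu u}) (GG u g))"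
    by (rule infsum_add) (simp_all add: nonneg_summable_on_complete)
  also have "(\<Sum>\<^sub>\<infinity>u. ennreal ((cmod (AA g u))\<^sup>2)) = nn UNIV (AA g)" by (simp add: nn_def)
  finally show ?thesis by (simp add: add.assoc)
qed

lemma AA_contract: "sq UNIV g \<Longrightarrow> nn UNIV (AA g) \<le> nn UNIV g"
proof -
  assume g: "sq UNIV g"
  have "nn UNIV (AA g) \<le> nn UNIV (AA g) + (ennreal ((cmod (g rt))\<^sup>2) + (\<Sum>\<^sub>\<infinity>u. nn (Chi u - {wu u}) (GG u g)))"
    by (rule add_increasing2) simp_all
  also have "\<dots> = nn UNIV g" unfolding star[OF g] by (simp add: ac_simps)
  finally show ?thesis .
qed

lemma sq_AA: "sq UNIV g \<Longrightarrow> sq UNIV (AA g)"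
proof -
  assume g: "sq UNIV g"
  have "nn UNIV (AA g) < \<infinity>" using AA_contract[OF g] g unfolding sq_iff_nn by (rule le_less_trans)
  then show ?thesis by (simp add: sq_iff_nn)
qed

lemma AA_lin: "sq UNIV f \<Longrightarrow> sq UNIV g \<Longrightarrow> AA (\<lambda>a. c * f a + g a) = (\<lambda>u. c * AA f u + AA g u)"
  unfolding AA_def by (intro ext ip_lin sq_chi sq_su)

lemma sq_AAn: "sq UNIV f \<Longrightarrow> sq UNIV ((AA ^^ m) f)"
  by (induction m) (simp_all add: sq_AA)

lemma AAn_lin: "sq UNIV f \<Longrightarrow> sq UNIV g \<Longrightarrow> (AA ^^ m) (\<lambda>a. c * f a + g a) = (\<lambda>u. c * (AA ^^ m) f u + (AA ^^ m) g u)"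
proof (induction m)
  case 0 then show ?case by simp
next
  case (Suc m)
  then show ?case by (simp add: AA_lin sq_AAn)
qed

lemma AAn_contract: "sq UNIV g \<Longrightarrow> nn UNIV ((AA ^^ m) g) \<le> nn UNIV g"
proof (induction m)
  case 0 then show ?case by simp
next
  case (Suc m)
  then show ?case using AA_contract[OF sq_AAn[OF Suc.prems, of m]] by (simp add: order_trans)
qed

definition PP :: "nat \<Rightarrow> ('v \<Rightarrow> complex) \<Rightarrow> 'v \<Rightarrow> complex" where
  "PP K g = (\<lambda>v. if K \<le> dep v then g v else 0)"

lemma PP_0: "PP 0 g = g" by (simp add: PP_def)

lemma sq_PP: "sq C g \<Longrightarrow> sq C (PP K g)"
  unfolding sq_def
  by (rule summable_on_comparison_test[of "\<lambda>a. (cmod (g a))\<^sup>2"]) (auto simp: PP_def)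

lemma AA_PP: "AA (PP (Suc K) g) = PP K (AA g)"
proof
  fix u
  show "AA (PP (Suc K) g) u = PP K (AA g) u"
  proof (cases "K \<le> dep u")
    case True
    have "ip (Chi u) (PP (Suc K) g) (su u) = ip (Chi u) g (su u)"
      by (rule ip_cong) (auto simp: PP_def dep_chi True)
    then show ?thesis using True by (simp add: AA_def PP_def)
  next
    case False
    have "ip (Chi u) (PP (Suc K) g) (su u) = ip (Chi u) (\<lambda>_. 0) (su u)"
      by (rule ip_cong) (use False in \<open>auto simp: PP_def dep_chi\<close>)
    then show ?thesis using False by (simp add: AA_def PP_def ip_def)
  qed
qed

lemma AAn_PP: "(AA ^^ M) (PP (M + K) g) = PP K ((AA ^^ M) g)"
proof (induction M arbitrary: K)
  case 0 then show ?case by simp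
next
  case (Suc M)
  have "(AA ^^ Suc M) (PP (Suc M + K) g) = AA ((AA ^^ M) (PP (M + Suc K) g))" by simp
  also have "\<dots> = AA (PP (Suc K) ((AA ^^ M) g))" by (simp only: Suc.IH)
  also have "\<dots> = PP K ((AA ^^ Suc M) g)" by (simp add: AA_PP)
  finally show ?case .
qed

lemma AAn_PP': "(AA ^^ M) (PP M g) = (AA ^^ M) g"
  using AAn_PP[of M 0 g] by (simp add: PP_0)

lemma tail:
  assumes f: "sq UNIV f" and e: "e > 0"
  shows "\<exists>M. nn UNIV (PP M f) \<le> ennreal e"
proof -
  define h where "h = (\<lambda>v. (cmod (f v))\<^sup>2)"
  have hs: "h summable_on UNIV" using f by (simp add: sq_def h_def)
  obtain F where F: "finite F" "dist (sum h F) (infsum h UNIV) \<le> e"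
    using infsum_finite_approximation[OF hs e] by blast
  define M where "M = Suc (Max (insert 0 (dep ` F)))"
  have FM: "\<And>v. v \<in> F \<Longrightarrow> dep v < M"
    using F(1) unfolding M_def by (simp add: le_imp_less_Suc)
  have sP: "sq UNIV (PP M f)" by (rule sq_PP[OF f])
  have s2: "(\<lambda>v. if v \<in> F then h v else 0) summable_on UNIV"
    by (rule finite_nonzero_values_imp_summable_on) (rule finite_subset[OF _ F(1)], auto)
  have sumF: "sum h F = (\<Sum>\<^sub>\<infinity>v. if v \<in> F then h v else 0)"
  proof -
    have "(\<Sum>\<^sub>\<infinity>v. if v \<in> F then h v else 0) = (\<Sum>\<^sub>\<infinity>v\<in>F. h v)"
      by (rule infsum_cong_neutral) auto
    then show ?thesis using F(1) by simp
  qed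
  have "n2 UNIV (PP M f) + sum h F = (\<Sum>\<^sub>\<infinity>v. (cmod (PP M f v))\<^sup>2 + (if v \<in> F then h v else 0))"
    unfolding sumF n2_def
    by (rule infsum_add[symmetric]) (use sP s2 in \<open>simp_all add: sq_def\<close>)
  also have "\<dots> \<le> infsum h UNIV"
  proof (rule infsum_mono)
    show "(\<lambda>v. (cmod (PP M f v))\<^sup>2 + (if v \<in> F then h v else 0)) summable_on UNIV"
      using sP s2 by (intro summable_on_add) (simp_all add: sq_def)
    show "h summable_on UNIV" by (rule hs)
    fix v
    show "(cmod (PP M f v))\<^sup>2 + (if v \<in> F then h v else 0) \<le> h v"
      using FM[of v] by (auto simp: PP_def h_def)
  qed
  finally have "n2 UNIV (PP M f) \<le> infsum h UNIV - sum h F" by simp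
  also have "\<dots> \<le> e" using F(2) by (simp add: dist_real_def)
  finally have "n2 UNIV (PP M f) \<le> e" .
  then have "nn UNIV (PP M f) \<le> ennreal e" unfolding nn_sq[OF sP] by (rule ennreal_leI)
  then show ?thesis by blast
qed

lemma tail_AA:
  assumes f: "sq UNIV f" and e: "e > 0"
  shows "\<exists>M. nn UNIV ((AA ^^ M) f) \<le> ennreal e"
proof -
  obtain M where M: "nn UNIV (PP M f) \<le> ennreal e" using tail[OF f e] by blast
  have "nn UNIV ((AA ^^ M) f) = nn UNIV ((AA ^^ M) (PP M f))" by (simp add: AAn_PP')
  also have "\<dots> \<le> nn UNIV (PP M f)" by (rule AAn_contract[OF sq_PP[OF f]])
  finally show ?thesis using M order_trans by blast
qed

end



context tr
begin

lemma gen_eq: "generation par rt n = {u. dep u = n}"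
proof (induction n)
  case 0 then show ?case using dep0 by auto
next
  case (Suc n)
  show ?case
  proof (intro set_eqI iffI)
    fix v assume "v \<in> generation par rt (Suc n)"
    then show "v \<in> {u. dep u = Suc n}" using Suc dep_chi by auto
  next
    fix v assume v: "v \<in> {u. dep u = Suc n}"
    then have "v \<noteq> rt" using dep_rt by auto
    then have "v \<in> Chi (par v)" "dep (par v) = n" using dep_par[of v] v by (auto simp: chi_iff)
    then show "v \<in> generation par rt (Suc n)" using Suc by auto
  qed
qed

abbreviation "J \<equiv> sum_index par rt"
abbreviation "rtj \<equiv> (0::nat, rt, rt)"

lemma J_mem: "(k, u, c) \<in> J \<longleftrightarrow> (k, u, c) = rtj \<or> (k = Suc (dep u) \<and> c \<in> Chi u \<and> c \<noteq> wu u)"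
  unfolding sum_index_def branching_set_def gen_eq wu_def by auto

definition bm :: "'v \<times> 'v \<Rightarrow> nat \<times> 'v \<times> 'v" where "bm = (\<lambda>(u, c). (Suc (dep u), u, c))"

lemma J_eq: "J = insert rtj (bm ` (SIGMA u:UNIV. Chi u - {wu u}))"
proof (intro set_eqI iffI)
  fix j assume "j \<in> J"
  then obtain k u c where j: "j = (k, u, c)" "(k,u,c) \<in> J" by (cases j) auto
  then show "j \<in> insert rtj (bm ` (SIGMA u:UNIV. Chi u - {wu u}))"
    unfolding J_mem bm_def by (auto intro!: image_eqI[of _ _ "(u, c)"])
next
  fix j assume "j \<in> insert rtj (bm ` (SIGMA u:UNIV. Chi u - {wu u}))"
  then show "j \<in> J" unfolding bm_def by (auto simp: J_mem)
qed

lemma root_in_J: "rtj \<in> J" by (simp add: J_mem)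

lemma bm_inj: "inj_on bm X" unfolding bm_def inj_on_def by auto

lemma column:
  fixes \<psi> :: "nat \<times> 'v \<times> 'v \<Rightarrow> ennreal"
  shows "infsum \<psi> J = \<psi> rtj + (\<Sum>\<^sub>\<infinity>u. \<Sum>\<^sub>\<infinity>c\<in>Chi u - {wu u}. \<psi> (Suc (dep u), u, c))"
proof -
  have nr: "rtj \<notin> bm ` (SIGMA u:UNIV. Chi u - {wu u})" by (auto simp: bm_def)
  have "infsum \<psi> J = \<psi> rtj + infsum \<psi> (bm ` (SIGMA u:UNIV. Chi u - {wu u}))"
    unfolding J_eq by (rule infsum_insert[OF _ nr]) (simp add: nonneg_summable_on_complete)
  also have "infsum \<psi> (bm ` (SIGMA u:UNIV. Chi u - {wu u})) = infsum (\<psi> \<circ> bm) (SIGMA u:UNIV. Chi u - {wu u})"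
    by (rule infsum_reindex[OF bm_inj])
  also have "\<dots> = (\<Sum>\<^sub>\<infinity>u. \<Sum>\<^sub>\<infinity>c\<in>Chi u - {wu u}. \<psi> (Suc (dep u), u, c))"
    by (simp add: enn_infsum_Sigma bm_def)
  finally show ?thesis .
qed

definition UU :: "('v \<Rightarrow> complex) \<Rightarrow> (nat \<times> 'v \<times> 'v) \<times> nat \<Rightarrow> complex" where
  "UU f p = (if fst p \<in> J then (if fst (fst p) = 0 then (AA ^^ snd p) f rt
     else GG (fst (snd (fst p))) ((AA ^^ snd p) f) (snd (snd (fst p)))) else 0)"

lemma UU_root: "UU f (rtj, m) = (AA ^^ m) f rt"
  by (simp add: UU_def root_in_J)

lemma UU_br: "c \<in> Chi u \<Longrightarrow> c \<noteq> wu u \<Longrightarrow> UU f ((Suc (dep u), u, c), m) = GG u ((AA ^^ m) f) c"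
  by (simp add: UU_def J_mem)

lemma UU_out: "j \<notin> J \<Longrightarrow> UU f (j, m) = 0"
  by (simp add: UU_def)

lemma J_cases: "j \<in> J \<Longrightarrow> j = rtj \<or> (\<exists>u c. j = (Suc (dep u), u, c) \<and> c \<in> Chi u \<and> c \<noteq> wu u)"
  by (cases j) (auto simp: J_mem)

definition col :: "('v \<Rightarrow> complex) \<Rightarrow> nat \<Rightarrow> ennreal" where
  "col f m = nn J (\<lambda>j. UU f (j, m))"

lemma col_eq: "col f m = ennreal ((cmod ((AA ^^ m) f rt))\<^sup>2) + (\<Sum>\<^sub>\<infinity>u. nn (Chi u - {wu u}) (GG u ((AA ^^ m) f)))"
proof -
  have "col f m = ennreal ((cmod (UU f (rtj, m)))\<^sup>2)
      + (\<Sum>\<^sub>\<infinity>u. \<Sum>\<^sub>\<infinity>c\<in>Chi u - {wu u}. ennreal ((cmod (UU f ((Suc (dep u), u, c), m)))\<^sup>2))"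
    unfolding col_def nn_def by (rule column)
  also have "(\<Sum>\<^sub>\<infinity>u. \<Sum>\<^sub>\<infinity>c\<in>Chi u - {wu u}. ennreal ((cmod (UU f ((Suc (dep u), u, c), m)))\<^sup>2))
      = (\<Sum>\<^sub>\<infinity>u. nn (Chi u - {wu u}) (GG u ((AA ^^ m) f)))"
    unfolding nn_def by (intro infsum_cong) (simp add: UU_br)
  finally show ?thesis by (simp add: UU_root)
qed

lemma nn_step: "sq UNIV f \<Longrightarrow> nn UNIV ((AA ^^ m) f) = col f m + nn UNIV ((AA ^^ Suc m) f)"
  using star[OF sq_AAn, of f m] unfolding col_eq by (simp add: ac_simps)

lemma partial: "sq UNIV f \<Longrightarrow> (\<Sum>m<M. col f m) + nn UNIV ((AA ^^ M) f) = nn UNIV f"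
proof (induction M)
  case 0 then show ?case by simp
next
  case (Suc M)
  have "(\<Sum>m<Suc M. col f m) + nn UNIV ((AA ^^ Suc M) f) = (\<Sum>m<M. col f m) + (col f M + nn UNIV ((AA ^^ Suc M) f))"
    by (simp add: ac_simps)
  also have "\<dots> = (\<Sum>m<M. col f m) + nn UNIV ((AA ^^ M) f)" using nn_step[OF Suc.prems, of M] by simp
  also have "\<dots> = nn UNIV f" by (rule Suc.IH[OF Suc.prems])
  finally show ?case .
qed

abbreviation "BB \<equiv> J \<times> (UNIV :: nat set)"

lemma nn_BB: "nn BB F = (\<Sum>\<^sub>\<infinity>m. nn J (\<lambda>j. F (j, m)))"
proof -
  have eq: "BB = (\<lambda>(m, j). (j, m)) ` (UNIV \<times> J)" by auto
  have inj: "inj_on (\<lambda>(m, j). (j, m)) (UNIV \<times> J)" by (auto simp: inj_on_def)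
  have "nn BB F = infsum ((\<lambda>p. ennreal ((cmod (F p))\<^sup>2)) \<circ> (\<lambda>(m, j). (j, m))) (UNIV \<times> J)"
    unfolding nn_def by (subst eq) (rule infsum_reindex[OF inj])
  also have "\<dots> = (\<Sum>\<^sub>\<infinity>m. nn J (\<lambda>j. F (j, m)))"
    by (simp add: enn_infsum_Sigma nn_def)
  finally show ?thesis .
qed

lemma norm_UU:
  assumes f: "sq UNIV f"
  shows "nn BB (UU f) = nn UNIV f"
proof -
  have e: "nn BB (UU f) = (\<Sum>\<^sub>\<infinity>m. col f m)" unfolding nn_BB col_def ..
  show ?thesis unfolding e
  proof (rule antisym)
    show "(\<Sum>\<^sub>\<infinity>m. col f m) \<le> nn UNIV f"
    proof (rule enn_infsum_le)
      fix F :: "nat set" assume F: "finite F"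
      obtain M where M: "F \<subseteq> {..<M}"
        using F finite_nat_iff_bounded by auto
      have "sum (col f) F \<le> sum (col f) {..<M}" using M by (intro sum_mono2) auto
      also have "\<dots> \<le> (\<Sum>m<M. col f m) + nn UNIV ((AA ^^ M) f)" by simp
      also have "\<dots> = nn UNIV f" by (rule partial[OF f])
      finally show "sum (col f) F \<le> nn UNIV f" .
    qed
    show "nn UNIV f \<le> (\<Sum>\<^sub>\<infinity>m. col f m)"
    proof (rule ennreal_le_epsilon)
      fix e :: real assume e: "0 < e"
      obtain M where M: "nn UNIV ((AA ^^ M) f) \<le> ennreal e" using tail_AA[OF f e] by blast
      have "nn UNIV f = (\<Sum>m<M. col f m) + nn UNIV ((AA ^^ M) f)" by (rule partial[OF f, symmetric])
      also have "\<dots> \<le> (\<Sum>\<^sub>\<infinity>m. col f m) + ennreal e"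
        by (intro add_mono enn_sum_le_infsum M) auto
      finally show "nn UNIV f \<le> (\<Sum>\<^sub>\<infinity>m. col f m) + ennreal e" .
    qed
  qed
qed

lemma nat_infsum_split:
  fixes a :: "nat \<Rightarrow> ennreal"
  shows "(\<Sum>\<^sub>\<infinity>m. a m) = a 0 + (\<Sum>\<^sub>\<infinity>m. a (Suc m))"
proof -
  have eq: "(UNIV :: nat set) = insert 0 (range Suc)" by (auto intro: nat.exhaust)
  have "(\<Sum>\<^sub>\<infinity>m. a m) = a 0 + infsum a (range Suc)"
    by (subst eq) (rule infsum_insert, simp_all add: nonneg_summable_on_complete)
  also have "infsum a (range Suc) = infsum (a \<circ> Suc) UNIV" by (rule infsum_reindex) simp
  finally show ?thesis by (simp add: o_def)
qed

definition shiftF :: "((nat \<times> 'v \<times> 'v) \<times> nat \<Rightarrow> complex) \<Rightarrow> (nat \<times> 'v \<times> 'v) \<times> nat \<Rightarrow> complex" where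
  "shiftF F = (\<lambda>p. F (fst p, Suc (snd p)))"

lemma nn_BB_shift: "nn BB F = nn J (\<lambda>j. F (j, 0)) + nn BB (shiftF F)"
  unfolding nn_BB by (subst nat_infsum_split) (simp add: shiftF_def)

end



context tr
begin

primrec Psi :: "nat \<Rightarrow> ((nat \<times> 'v \<times> 'v) \<times> nat \<Rightarrow> complex) \<Rightarrow> 'v \<Rightarrow> complex" where
  "Psi 0 F = (\<lambda>v. F (rtj, 0))"
| "Psi (Suc n) F = (\<lambda>v. hGi (Chi (par v)) (su (par v)) (wu (par v))
      (\<lambda>c. if c = wu (par v) then Psi n (shiftF F) (par v) else F ((Suc n, par v, c), 0)) v)"

definition fF :: "((nat \<times> 'v \<times> 'v) \<times> nat \<Rightarrow> complex) \<Rightarrow> 'v \<Rightarrow> complex" where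
  "fF F = (\<lambda>v. Psi (dep v) F v)"

definition hvec :: "((nat \<times> 'v \<times> 'v) \<times> nat \<Rightarrow> complex) \<Rightarrow> 'v \<Rightarrow> 'v \<Rightarrow> complex" where
  "hvec F u = (\<lambda>c. if c = wu u then fF (shiftF F) u else F ((Suc (dep u), u, c), 0))"

lemma fF_rt: "fF F rt = F (rtj, 0)"
  by (simp add: fF_def dep_rt)

lemma fF_chi: "c \<in> Chi u \<Longrightarrow> fF F c = hGi (Chi u) (su u) (wu u) (hvec F u) c"
proof -
  assume c: "c \<in> Chi u"
  then have pc: "par c = u" and dc: "dep c = Suc (dep u)" by (auto simp: chi_iff dep_chi)
  have "fF F c = Psi (Suc (dep u)) F c" by (simp add: fF_def dc)
  also have "\<dots> = hGi (Chi u) (su u) (wu u)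
      (\<lambda>c'. if c' = wu u then Psi (dep u) (shiftF F) u else F ((Suc (dep u), u, c'), 0)) c"
    by (simp only: Psi.simps pc)
  also have "\<dots> = hGi (Chi u) (su u) (wu u) (hvec F u) c"
    unfolding hvec_def fF_def by simp
  finally show ?thesis .
qed

definition LB :: "((nat \<times> 'v \<times> 'v) \<times> nat \<Rightarrow> complex) \<Rightarrow> bool" where
  "LB F \<longleftrightarrow> (\<forall>p. p \<notin> BB \<longrightarrow> F p = 0) \<and> sq BB F"

lemma l2_BB: "F \<in> l2 BB \<longleftrightarrow> LB F"
  by (simp add: l2_def LB_def sq_def)

definition colF0 :: "((nat \<times> 'v \<times> 'v) \<times> nat \<Rightarrow> complex) \<Rightarrow> 'v \<Rightarrow> ennreal" where
  "colF0 F u = nn (Chi u - {wu u}) (\<lambda>c. F ((Suc (dep u), u, c), 0))"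

lemma col0_eq: "nn J (\<lambda>j. F (j, 0)) = ennreal ((cmod (F (rtj, 0)))\<^sup>2) + (\<Sum>\<^sub>\<infinity>u. colF0 F u)"
  unfolding nn_def colF0_def by (rule column)

lemma nnBB_eq: "nn BB F = ennreal ((cmod (F (rtj, 0)))\<^sup>2) + (\<Sum>\<^sub>\<infinity>u. colF0 F u) + nn BB (shiftF F)"
  using nn_BB_shift[of F] col0_eq[of F] by simp

lemma LB_fin: "LB F \<Longrightarrow> nn BB F < \<infinity>"
  by (simp add: LB_def sq_iff_nn)

lemma LB_shift: "LB F \<Longrightarrow> LB (shiftF F)"
proof -
  assume F: "LB F"
  have "nn BB (shiftF F) \<le> nn BB F" unfolding nnBB_eq[of F] by (simp add: add_increasing)
  then have "nn BB (shiftF F) < \<infinity>" using LB_fin[OF F] by (rule le_less_trans)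
  moreover have "\<forall>p. p \<notin> BB \<longrightarrow> shiftF F p = 0" using F by (auto simp: LB_def shiftF_def)
  ultimately show ?thesis by (simp add: LB_def sq_iff_nn)
qed

lemma colF0_le: "colF0 F u \<le> nn BB F"
proof -
  have "colF0 F u = (\<Sum>v\<in>{u}. colF0 F v)" by simp
  also have "\<dots> \<le> (\<Sum>\<^sub>\<infinity>u. colF0 F u)" by (rule enn_sum_le_infsum) auto
  also have "\<dots> \<le> nn BB F" unfolding nnBB_eq[of F] by (simp add: add_increasing add_increasing2)
  finally show ?thesis .
qed

lemma nn_hvec: "nn (Chi u) (hvec F u) = ennreal ((cmod (fF (shiftF F) u))\<^sup>2) + colF0 F u"
proof -
  have "nn (Chi u) (hvec F u) = ennreal ((cmod (hvec F u (wu u)))\<^sup>2) + nn (Chi u - {wu u}) (hvec F u)"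
    by (rule nn_split[OF wu_in])
  also have "nn (Chi u - {wu u}) (hvec F u) = colF0 F u"
    unfolding colF0_def by (rule nn_cong) (simp add: hvec_def)
  finally show ?thesis by (simp add: hvec_def)
qed

lemma sq_hvec: "LB F \<Longrightarrow> sq (Chi u) (hvec F u)"
proof -
  assume F: "LB F"
  have "colF0 F u < \<infinity>" using colF0_le[of F u] LB_fin[OF F] by (rule le_less_trans)
  then show ?thesis unfolding sq_iff_nn nn_hvec by simp
qed

lemma nn_chi_fF: "LB F \<Longrightarrow> nn (Chi u) (fF F) = ennreal ((cmod (fF (shiftF F) u))\<^sup>2) + colF0 F u"
proof -
  assume F: "LB F"
  interpret hh "Chi u" "su u" "wu u" by (rule hhu)
  have h: "sq (Chi u) (hvec F u)" by (rule sq_hvec[OF F])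
  have "nn (Chi u) (fF F) = nn (Chi u) (hGi (Chi u) (su u) (wu u) (hvec F u))"
    by (rule nn_cong) (simp add: fF_chi)
  also have "\<dots> = ennreal (n2 (Chi u) (hGi (Chi u) (su u) (wu u) (hvec F u)))"
    by (rule nn_sq[OF sq_hGi[OF h]])
  also have "\<dots> = ennreal (n2 (Chi u) (hvec F u))" by (simp add: hGi_n2[OF h])
  also have "\<dots> = nn (Chi u) (hvec F u)" by (rule nn_sq[OF h, symmetric])
  finally show ?thesis unfolding nn_hvec .
qed

lemma T_bound: "LB F \<Longrightarrow> nn {v. dep v \<le> K} (fF F) \<le> nn BB F"
proof (induction K arbitrary: F)
  case 0
  have "{v. dep v \<le> 0} = {rt}" using dep0 by auto
  then have "nn {v. dep v \<le> 0} (fF F) = ennreal ((cmod (F (rtj, 0)))\<^sup>2)"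
    by (simp add: nn_def fF_rt)
  also have "\<dots> \<le> nn BB F" unfolding nnBB_eq[of F] by (simp add: add.assoc add_increasing2)
  finally show ?case .
next
  case (Suc K)
  have Fs: "LB (shiftF F)" by (rule LB_shift[OF Suc.prems])
  have "nn {v. dep v \<le> Suc K} (fF F) = ennreal ((cmod (fF F rt))\<^sup>2) + (\<Sum>\<^sub>\<infinity>u\<in>{u. dep u \<le> K}. nn (Chi u) (fF F))"
    unfolding dep_le_split by (rule nn_tree_split)
  also have "(\<Sum>\<^sub>\<infinity>u\<in>{u. dep u \<le> K}. nn (Chi u) (fF F))
      = (\<Sum>\<^sub>\<infinity>u\<in>{u. dep u \<le> K}. ennreal ((cmod (fF (shiftF F) u))\<^sup>2) + colF0 F u)"
    by (rule infsum_cong) (rule nn_chi_fF[OF Suc.prems])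
  also have "\<dots> = nn {u. dep u \<le> K} (fF (shiftF F)) + (\<Sum>\<^sub>\<infinity>u\<in>{u. dep u \<le> K}. colF0 F u)"
    unfolding nn_def by (rule infsum_add) (simp_all add: nonneg_summable_on_complete)
  also have "\<dots> \<le> nn BB (shiftF F) + (\<Sum>\<^sub>\<infinity>u. colF0 F u)"
    by (intro add_mono Suc.IH[OF Fs] enn_infsum_mono_set) auto
  finally have "nn {v. dep v \<le> Suc K} (fF F) \<le> ennreal ((cmod (F (rtj, 0)))\<^sup>2) + (nn BB (shiftF F) + (\<Sum>\<^sub>\<infinity>u. colF0 F u))"
    by (simp add: fF_rt add_left_mono)
  also have "\<dots> = nn BB F" unfolding nnBB_eq[of F] by (simp add: ac_simps)
  finally show ?case .
qed

lemma nn_fF: "LB F \<Longrightarrow> nn UNIV (fF F) \<le> nn BB F"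
proof -
  assume F: "LB F"
  show ?thesis unfolding nn_def[of UNIV]
  proof (rule enn_infsum_le)
    fix X :: "'v set" assume X: "finite X" "X \<subseteq> UNIV"
    define K where "K = Max (insert 0 (dep ` X))"
    have "X \<subseteq> {v. dep v \<le> K}" using X unfolding K_def by auto
    then have "(\<Sum>v\<in>X. ennreal ((cmod (fF F v))\<^sup>2)) \<le> nn {v. dep v \<le> K} (fF F)"
      unfolding nn_def using X by (intro enn_sum_le_infsum) auto
    also have "\<dots> \<le> nn BB F" by (rule T_bound[OF F])
    finally show "(\<Sum>v\<in>X. ennreal ((cmod (fF F v))\<^sup>2)) \<le> nn BB F" .
  qed
qed

lemma sq_fF: "LB F \<Longrightarrow> sq UNIV (fF F)"
  unfolding sq_iff_nn using nn_fF LB_fin le_less_trans by blast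

lemma GG_fF: "LB F \<Longrightarrow> c \<in> Chi u \<Longrightarrow> GG u (fF F) c = hvec F u c"
proof -
  assume F: "LB F" and c: "c \<in> Chi u"
  interpret hh "Chi u" "su u" "wu u" by (rule hhu)
  have "GG u (fF F) c = hG (Chi u) (su u) (wu u) (hGi (Chi u) (su u) (wu u) (hvec F u)) c"
    unfolding GG_def by (rule hG_cong) (auto simp: fF_chi c)
  also have "\<dots> = hvec F u c" by (rule hG_hGi[OF sq_hvec[OF F]])
  finally show ?thesis .
qed

lemma AA_fF: "LB F \<Longrightarrow> AA (fF F) = fF (shiftF F)"
proof
  fix u assume F: "LB F"
  interpret hh "Chi u" "su u" "wu u" by (rule hhu)
  have "AA (fF F) u = GG u (fF F) (wu u)"
    unfolding AA_def GG_def by (rule hG_w[symmetric]) (rule sq_chi[OF sq_fF[OF F]])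
  also have "\<dots> = hvec F u (wu u)" by (rule GG_fF[OF F wu_in])
  finally show "AA (fF F) u = fF (shiftF F) u" by (simp add: hvec_def)
qed

lemma UU_Suc: "UU f (j, Suc m) = UU (AA f) (j, m)"
proof -
  have "(AA ^^ Suc m) f = (AA ^^ m) (AA f)" by (simp only: funpow_Suc_right comp_def)
  then show ?thesis unfolding UU_def by simp
qed

lemma UU_fF: "LB F \<Longrightarrow> UU (fF F) (j, m) = F (j, m)"
proof (induction m arbitrary: F)
  case 0
  show ?case
  proof (cases "j \<in> J")
    case False
    have "(j, 0) \<notin> BB" using False by simp
    with 0 have "F (j, 0) = 0" unfolding LB_def by blast
    then show ?thesis using False by (simp add: UU_out)
  next
    case True
    then consider "j = rtj" | u c where "j = (Suc (dep u), u, c)" "c \<in> Chi u" "c \<noteq> wu u"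
      using J_cases by blast
    then show ?thesis
    proof cases
      case 1 then show ?thesis by (simp add: UU_root fF_rt)
    next
      case 2 then show ?thesis using GG_fF[OF 0] by (simp add: UU_br hvec_def)
    qed
  qed
next
  case (Suc m)
  have "UU (fF F) (j, Suc m) = UU (fF (shiftF F)) (j, m)" by (simp add: UU_Suc AA_fF[OF Suc.prems])
  also have "\<dots> = shiftF F (j, m)" by (rule Suc.IH[OF LB_shift[OF Suc.prems]])
  finally show ?case by (simp add: shiftF_def)
qed

end



lemma polar:
  assumes f: "sq A f" and g: "sq A g" and uf: "sq B uf" and ug: "sq B ug"
    and n: "\<And>c. n2 B (\<lambda>b. uf b + c * ug b) = n2 A (\<lambda>a. f a + c * g a)"
    and nf: "n2 B uf = n2 A f" and ng: "n2 B ug = n2 A g"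
  shows "ip B uf ug = ip A f g"
proof -
  have key: "Re (cnj c * ip B uf ug) = Re (cnj c * ip A f g)" for c
    using n[of c] n2_expand[OF f g, of c] n2_expand[OF uf ug, of c] nf ng by simp
  have "Re (ip B uf ug) = Re (ip A f g)" using key[of 1] by simp
  moreover have "Im (ip B uf ug) = Im (ip A f g)" using key[of \<i>] by simp
  ultimately show ?thesis by (rule complex_eqI)
qed

context tr
begin

definition Mul :: "(nat \<Rightarrow> real) \<Rightarrow> ('v \<Rightarrow> complex) \<Rightarrow> 'v \<Rightarrow> complex" where
  "Mul \<phi> g = (\<lambda>v. complex_of_real (\<phi> (dep v)) * g v)"

lemma AA_S: "AA (S f) = Mul (\<lambda>n. xi n x0) f"
proof
  fix u
  have "ip (Chi u) (S f) (su u) = ip (Chi u) (\<lambda>c. f u * lam c) (su u)"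
    by (rule ip_cong) (simp_all add: S_chi mult.commute)
  also have "\<dots> = f u * ip (Chi u) lam (su u)"
    unfolding ip_def by (simp add: mult.assoc infsum_cmult_right')
  also have "ip (Chi u) lam (su u) = complex_of_real (1 / sqrt (aa u)) * ip (Chi u) lam lam"
  proof -
    have "ip (Chi u) lam (su u) = (\<Sum>\<^sub>\<infinity>a\<in>Chi u. complex_of_real (1 / sqrt (aa u)) * (lam a * cnj (lam a)))"
      unfolding ip_def su_def by (rule infsum_cong) (simp only: complex_cnj_mult complex_cnj_complex_of_real mult_ac)
    also have "\<dots> = complex_of_real (1 / sqrt (aa u)) * ip (Chi u) lam lam"
      unfolding ip_def by (rule infsum_cmult_right')
    finally show ?thesis .
  qed
  also have "ip (Chi u) lam lam = complex_of_real (aa u)"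
    unfolding aa_def by (rule ip_self[OF sq_lam])
  also have "complex_of_real (1 / sqrt (aa u)) * complex_of_real (aa u) = complex_of_real (sqrt (aa u))"
  proof -
    have "1 / sqrt (aa u) * aa u = sqrt (aa u)"
      using aa_pos[of u] by (simp add: real_div_sqrt)
    then show ?thesis by (simp only: of_real_mult[symmetric])
  qed
  finally show "AA (S f) u = Mul (\<lambda>n. xi n x0) f u"
    by (simp add: AA_def Mul_def xi_dep mult.commute)
qed

lemma AA_Mul: "AA (Mul \<phi> g) = Mul (\<lambda>n. \<phi> (Suc n)) (AA g)"
proof
  fix u
  have "ip (Chi u) (Mul \<phi> g) (su u) = ip (Chi u) (\<lambda>c. complex_of_real (\<phi> (Suc (dep u))) * g c) (su u)"
    by (rule ip_cong) (simp_all add: Mul_def dep_chi)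
  also have "\<dots> = complex_of_real (\<phi> (Suc (dep u))) * ip (Chi u) g (su u)"
    unfolding ip_def by (simp add: mult.assoc infsum_cmult_right')
  finally show "AA (Mul \<phi> g) u = Mul (\<lambda>n. \<phi> (Suc n)) (AA g) u"
    by (simp add: AA_def Mul_def)
qed

lemma AAn_Mul: "(AA ^^ m) (Mul \<phi> g) = Mul (\<lambda>n. \<phi> (n + m)) ((AA ^^ m) g)"
proof (induction m)
  case 0 then show ?case by simp
next
  case (Suc m)
  then show ?case by (simp add: AA_Mul)
qed

lemma AAn_S: "(AA ^^ Suc m) (S f) = Mul (\<lambda>n. xi (n + m) x0) ((AA ^^ m) f)"
proof -
  have "(AA ^^ Suc m) (S f) = (AA ^^ m) (AA (S f))" by (simp only: funpow_Suc_right comp_def)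
  also have "\<dots> = Mul (\<lambda>n. xi (n + m) x0) ((AA ^^ m) f)" by (simp add: AA_S AAn_Mul)
  finally show ?thesis .
qed

abbreviation "RR \<equiv> shift_sum (sum_param x0)"

lemma RR_0: "RR F (j, 0) = 0" by (simp add: shift_sum_def)
lemma RR_Suc: "RR F (j, Suc m) = complex_of_real (xi m (sum_param x0 j)) * F (j, m)"
  by (simp add: shift_sum_def)

lemma intertwine:
  assumes f: "sq UNIV f"
  shows "UU (S f) (j, m) = RR (UU f) (j, m)"
proof (cases "j \<in> J")
  case False
  then show ?thesis by (cases m) (simp_all add: UU_out RR_0 RR_Suc)
next
  case True
  then consider "j = rtj" | u c where "j = (Suc (dep u), u, c)" "c \<in> Chi u" "c \<noteq> wu u"
    using J_cases by blast
  then show ?thesis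
  proof cases
    case 1
    show ?thesis
    proof (cases m)
      case 0 then show ?thesis using 1 by (simp add: UU_root RR_0 S_rt)
    next
      case (Suc m')
      have "UU (S f) (rtj, Suc m') = (AA ^^ Suc m') (S f) rt" by (rule UU_root)
      also have "\<dots> = complex_of_real (xi (0 + m') x0) * (AA ^^ m') f rt"
        unfolding AAn_S by (simp add: Mul_def dep_rt)
      also have "\<dots> = RR (UU f) (rtj, Suc m')" unfolding RR_Suc UU_root by (simp add: sum_param_def)
      finally show ?thesis using 1 Suc by simp
    qed
  next
    case 2
    interpret hh "Chi u" "su u" "wu u" by (rule hhu)
    show ?thesis
    proof (cases m)
      case 0
      define \<kappa> where "\<kappa> = f u * complex_of_real (sqrt (aa u))"
      have "GG u (S f) c = hG (Chi u) (su u) (wu u) (\<lambda>c'. \<kappa> * su u c') c"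
        unfolding GG_def
      proof (rule hG_cong)
        fix c' assume c': "c' \<in> Chi u"
        have "sqrt (aa u) * (1 / sqrt (aa u)) = 1" using aa_pos[of u] by simp
        then have r1: "complex_of_real (sqrt (aa u)) * complex_of_real (1 / sqrt (aa u)) = 1"
          by (simp only: of_real_mult[symmetric] of_real_1)
        have "\<kappa> * su u c' = (f u * lam c') * (complex_of_real (sqrt (aa u)) * complex_of_real (1 / sqrt (aa u)))"
          unfolding \<kappa>_def su_def by (simp only: mult_ac)
        also have "\<dots> = f u * lam c'" by (simp only: r1 mult_1_right)
        also have "\<dots> = S f c'" by (simp only: S_chi[OF c'] mult.commute)
        finally show "S f c' = \<kappa> * su u c'" by (rule sym)
      qed (rule 2(2))
      also have "\<dots> = \<kappa> * hG (Chi u) (su u) (wu u) (su u) c" by (rule hG_scale[OF sq_su])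
      also have "\<dots> = 0" using hG_s[OF 2(2) 2(3)] by simp
      finally show ?thesis using 0 2 by (simp add: UU_br RR_0)
    next
      case (Suc m')
      have sA: "sq (Chi u) ((AA ^^ m') f)" by (rule sq_chi[OF sq_AAn[OF f]])
      have x: "xi m' (sum_param x0 (Suc (dep u), u, c)) = xi (Suc (dep u) + m') x0"
        by (simp add: sum_param_def xi_comp)
      have "UU (S f) (j, m) = GG u ((AA ^^ Suc m') (S f)) c"
        unfolding Suc 2(1) by (rule UU_br[OF 2(2) 2(3)])
      also have "GG u ((AA ^^ Suc m') (S f)) c
          = hG (Chi u) (su u) (wu u) (\<lambda>c'. complex_of_real (xi (Suc (dep u) + m') x0) * (AA ^^ m') f c') c"
        unfolding GG_def AAn_S by (rule hG_cong) (simp_all add: Mul_def dep_chi 2(2))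
      also have "\<dots> = complex_of_real (xi (Suc (dep u) + m') x0) * GG u ((AA ^^ m') f) c"
        unfolding GG_def by (rule hG_scale[OF sA])
      also have "\<dots> = RR (UU f) (j, m)"
        unfolding Suc 2(1) RR_Suc UU_br[OF 2(2) 2(3)] x ..
      finally show ?thesis .
    qed
  qed
qed

lemma UU_lin:
  assumes f: "sq UNIV f" and g: "sq UNIV g"
  shows "UU (\<lambda>a. c * f a + g a) p = c * UU f p + UU g p"
proof -
  obtain j m where p: "p = (j, m)" by (cases p)
  show ?thesis
  proof (cases "j \<in> J")
    case False then show ?thesis by (simp add: p UU_out)
  next
    case True
    then consider "j = rtj" | u c' where "j = (Suc (dep u), u, c')" "c' \<in> Chi u" "c' \<noteq> wu u"
      using J_cases by blast
    then show ?thesis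
    proof cases
      case 1 then show ?thesis by (simp add: p UU_root AAn_lin[OF f g])
    next
      case 2
      interpret hh "Chi u" "su u" "wu u" by (rule hhu)
      show ?thesis using 2
        by (simp add: p UU_br AAn_lin[OF f g] GG_def hG_lin[OF sq_chi[OF sq_AAn[OF f]] sq_chi[OF sq_AAn[OF g]]])
    qed
  qed
qed

lemma UU_out': "p \<notin> BB \<Longrightarrow> UU f p = 0"
  by (cases p) (simp add: UU_out)

lemma LB_UU: "sq UNIV f \<Longrightarrow> LB (UU f)"
proof -
  assume f: "sq UNIV f"
  have "nn BB (UU f) < \<infinity>" using norm_UU[OF f] f by (simp add: sq_iff_nn)
  then show ?thesis by (simp add: LB_def sq_iff_nn UU_out')
qed

lemma n2_UU: "sq UNIV f \<Longrightarrow> n2 BB (UU f) = n2 UNIV f"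
proof -
  assume f: "sq UNIV f"
  have sU: "sq BB (UU f)" using LB_UU[OF f] by (simp add: LB_def)
  have "ennreal (n2 BB (UU f)) = ennreal (n2 UNIV f)"
    using norm_UU[OF f] by (simp add: nn_sq[OF sU] nn_sq[OF f])
  then show ?thesis by (simp add: ennreal_inj n2_nonneg)
qed

lemma ip_BB_UNIV: "(\<And>p. p \<notin> BB \<Longrightarrow> F p = 0) \<Longrightarrow> ip UNIV F G = ip BB F G"
  unfolding ip_def by (rule infsum_cong_neutral) auto

lemma unitary: "unitarily_equivalent UNIV S BB RR"
  unfolding unitarily_equivalent_def
proof (intro exI conjI ballI allI)
  show lin: "UU (\<lambda>a. c * f a + g a) = (\<lambda>b. c * UU f b + UU g b)" if "f \<in> l2 UNIV" "g \<in> l2 UNIV" for f g c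
    using that by (intro ext UU_lin) (simp_all add: l2_UNIV)
  show "UU (S f) = RR (UU f)" if "f \<in> l2 UNIV" for f
  proof
    fix p :: "(nat \<times> 'v \<times> 'v) \<times> nat"
    obtain j m where p: "p = (j, m)" by (cases p)
    show "UU (S f) p = RR (UU f) p" unfolding p by (rule intertwine) (use that in \<open>simp add: l2_UNIV\<close>)
  qed
  show "l2_inner (UU f) (UU g) = l2_inner f g" if "f \<in> l2 UNIV" "g \<in> l2 UNIV" for f g
  proof -
    have f: "sq UNIV f" and g: "sq UNIV g" using that by (simp_all add: l2_UNIV)
    have "l2_inner (UU f) (UU g) = ip BB (UU f) (UU g)"
      unfolding l2_inner_ip by (rule ip_BB_UNIV) (simp add: UU_out')
    also have "\<dots> = ip UNIV f g"
    proof (rule polar[OF f g])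
      show "sq BB (UU f)" "sq BB (UU g)" using LB_UU f g by (simp_all add: LB_def)
      show "n2 BB (UU f) = n2 UNIV f" "n2 BB (UU g) = n2 UNIV g" using n2_UU f g by simp_all
      fix c
      have e: "(\<lambda>b. UU f b + c * UU g b) = UU (\<lambda>a. c * g a + f a)"
        by (rule ext, subst UU_lin[OF g f]) (simp add: add.commute)
      have e2: "(\<lambda>a. f a + c * g a) = (\<lambda>a. c * g a + f a)" by (rule ext) (simp add: add.commute)
      show "n2 BB (\<lambda>b. UU f b + c * UU g b) = n2 UNIV (\<lambda>a. f a + c * g a)"
        unfolding e e2 by (rule n2_UU) (intro sq_lin g f)
    qed
    finally show ?thesis by (simp add: l2_inner_ip)
  qed
  show "bij_betw UU (l2 UNIV) (l2 BB)"
  proof (rule bij_betw_imageI)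
    show "inj_on UU (l2 UNIV)"
    proof (rule inj_onI)
      fix f g assume f: "f \<in> l2 UNIV" and g: "g \<in> l2 UNIV" and e: "UU f = UU g"
      have sf: "sq UNIV f" and sg: "sq UNIV g" using f g by (simp_all add: l2_UNIV)
      have sd: "sq UNIV (\<lambda>a. (-1) * g a + f a)" by (intro sq_lin sf sg)
      have "UU (\<lambda>a. (-1) * g a + f a) = (\<lambda>p. 0)"
        by (rule ext, subst UU_lin[OF sg sf]) (simp add: e)
      then have "n2 UNIV (\<lambda>a. (-1) * g a + f a) = 0"
        using n2_UU[OF sd] by (simp add: n2_def)
      then have "\<And>a. (-1) * g a + f a = 0" using n2_zero_pt[OF sd] by simp
      then show "f = g" by (simp add: fun_eq_iff)
    qed
    show "UU ` l2 UNIV = l2 BB"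
    proof (intro set_eqI iffI)
      fix F assume "F \<in> UU ` l2 UNIV"
      then show "F \<in> l2 BB" using LB_UU by (auto simp: l2_BB l2_UNIV)
    next
      fix F assume "F \<in> l2 BB"
      then have F: "LB F" by (simp add: l2_BB)
      have "F = UU (fF F)"
      proof
        fix p :: "(nat \<times> 'v \<times> 'v) \<times> nat"
        obtain j m where p: "p = (j, m)" by (cases p)
        show "F p = UU (fF F) p" unfolding p by (rule UU_fF[OF F, symmetric])
      qed
      moreover have "fF F \<in> l2 UNIV" using sq_fF[OF F] by (simp add: l2_UNIV)
      ultimately show "F \<in> UU ` l2 UNIV" by blast
    qed
  qed
qed

lemma countable_part:
  assumes nz: "\<forall>v. v \<noteq> rt \<longrightarrow> lam v \<noteq> 0"
  shows "countable (branching_set par rt k)"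
proof -
  have cchi: "countable (Chi u)" for u
  proof -
    have "countable {x \<in> Chi u. (cmod (lam x))\<^sup>2 \<noteq> 0}"
      by (rule summable_countable_real) (use sq_lam[of u] in \<open>simp add: sq_def\<close>)
    also have "{x \<in> Chi u. (cmod (lam x))\<^sup>2 \<noteq> 0} = Chi u" using nz by (auto simp: chi_iff)
    finally show ?thesis .
  qed
  have cg: "countable (generation par rt n)" for n
    by (induction n) (simp_all add: cchi)
  show ?thesis unfolding branching_set_def
    by (rule countable_SIGMA) (auto intro: cg countable_Diff cchi)
qed

end

theorem mainTheorem15:
  fixes par :: "'v \<Rightarrow> 'v" and rt :: 'v and lam :: "'v \<Rightarrow> complex"
  assumes tree: "rooted_tree par rt"
    and bdd: "bounded_on_l2 UNIV (tree_shift par rt lam)"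
    and twoiso: "two_isometry UNIV (tree_shift par rt lam)"
    and alpha: "\<exists>\<alpha> :: 'v \<Rightarrow> real. (\<forall>v. \<alpha> v \<ge> 0) \<and>
                  (\<forall>u. u \<noteq> rt \<longrightarrow>
                     l2_norm (tree_shift par rt lam (unit_vec u)) = \<alpha> (par u))"
  shows "leafless par rt \<and>
         unitarily_equivalent UNIV (tree_shift par rt lam)
           (sum_index par rt \<times> UNIV)
           (shift_sum (sum_param (l2_norm (tree_shift par rt lam (unit_vec rt))))) \<and>
         ((\<forall>v. v \<noteq> rt \<longrightarrow> lam v \<noteq> 0) \<longrightarrow>
            (\<forall>k\<ge>1. countable (branching_set par rt k)))"
proof -
  obtain al :: "'v \<Rightarrow> real" where al: "\<forall>v. al v \<ge> 0"
    "\<forall>u. u \<noteq> rt \<longrightarrow> l2_norm (tree_shift par rt lam (unit_vec u)) = al (par u)"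
    using alpha by blast
  interpret tr par rt lam al
    by unfold_locales (use tree bdd twoiso al in auto)
  have "leafless par rt" unfolding leafless_def using chi_ne by blast
  moreover have "unitarily_equivalent UNIV (tree_shift par rt lam) (sum_index par rt \<times> UNIV)
           (shift_sum (sum_param (l2_norm (tree_shift par rt lam (unit_vec rt)))))"
    using unitary unfolding x0_def .
  moreover have "(\<forall>v. v \<noteq> rt \<longrightarrow> lam v \<noteq> 0) \<longrightarrow> (\<forall>k\<ge>1. countable (branching_set par rt k))"
    using countable_part by blast
  ultimately show ?thesis by blast
qed


end
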